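(* Let $s$ be a degree sequence and let $U,U'\in\mathcal{U}(s)$. Then there exists a u-switch sequence transforming $U$ into $U'$; that is, there are 2-switches $\tau_1,\dots,\tau_k$ ($k\ge 0$) such that, with $U_0=U$ and $U_i=\tau_i(U_{i-1})$, each $\tau_i$ is a u-switch over $U_{i-1}$ and $U_k=U'$. In particular every intermediate graph $U_i$ is a unicyclic graph with degree sequence $s$.
   Context: All graphs are finite, simple, undirected and labeled, with vertex set $[n]=\{1,\dots,n\}$. The degree sequence of a graph $G$ with $V(G)=[n]$ is $s(G)=(d_1,\dots,d_n)$ where $d_i$ is the degree of vertex $i$; so two graphs have the same degree sequence iff every vertex has the same degree in both. A graph is unicyclic if it is connected and contains exactly one cycle; $\mathcal{U}(s)$ denotes the set of unicyclic graphs with degree sequence $s$. For $a,b,c,d\in[n]$, the matrix $A=\binom{a\ b}{c\ d}$ is interchangeable in $G$ if $ab,cd\in E(G)$, $\{a,b\}\cap\{c,d\}=\varnothing$ and $ac,bd\notin E(G)$. The 2-switch $\tau_A$ is the map sending $G$ to $G-ab-cd+ac+bd$ if $A$ is interchangeable in $G$, and to $G$ otherwise (in which case $\tau_A$ is trivial for $G$). A nontrivial 2-switch $\tau$ over a unicyclic graph $U$ is a u-switch if $\tau(U)$ is unicyclic. The empty sequence counts as a u-switch sequence. *)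

theory Defs
  imports Main
begin

text \<open>A simple graph on vertex set [n] = {1..n} is represented by its edge set,
  a set of 2-element subsets of {1..n}.\<close>

type_synonym graph = "nat set set"

definition simple_graph :: "nat \<Rightarrow> graph \<Rightarrow> bool" where
  "simple_graph n E \<longleftrightarrow> (\<forall>e\<in>E. e \<subseteq> {1..n} \<and> card e = 2)"

definition adj :: "graph \<Rightarrow> nat \<Rightarrow> nat \<Rightarrow> bool" where
  "adj E u v \<longleftrightarrow> {u, v} \<in> E"

definition degree :: "graph \<Rightarrow> nat \<Rightarrow> nat" where
  "degree E v = card {e \<in> E. v \<in> e}"

definition deg_seq :: "nat \<Rightarrow> graph \<Rightarrow> nat list" where
  "deg_seq n E = map (degree E) [1..<n+1]"

fun is_walk :: "graph \<Rightarrow> nat list \<Rightarrow> bool" where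
  "is_walk E [] = False"
| "is_walk E [v] = True"
| "is_walk E (u # v # vs) = (adj E u v \<and> is_walk E (v # vs))"

definition connected :: "nat \<Rightarrow> graph \<Rightarrow> bool" where
  "connected n E \<longleftrightarrow> (\<forall>u\<in>{1..n}. \<forall>v\<in>{1..n}.
      \<exists>p. is_walk E p \<and> hd p = u \<and> last p = v)"

definition cycle_edges :: "nat list \<Rightarrow> nat set set" where
  "cycle_edges vs = {{vs ! i, vs ! ((i + 1) mod length vs)} | i. i < length vs}"

definition is_cycle :: "graph \<Rightarrow> nat list \<Rightarrow> bool" where
  "is_cycle E vs \<longleftrightarrow> length vs \<ge> 3 \<and> distinct vs \<and> cycle_edges vs \<subseteq> E"

text \<open>Cycles of E as subgraphs (identified by their edge sets).\<close>
definition cycles :: "graph \<Rightarrow> nat set set set" where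
  "cycles E = {cycle_edges vs | vs. is_cycle E vs}"

definition unicyclic :: "nat \<Rightarrow> graph \<Rightarrow> bool" where
  "unicyclic n E \<longleftrightarrow> simple_graph n E \<and> connected n E \<and> (\<exists>!C. C \<in> cycles E)"

definition U_set :: "nat list \<Rightarrow> graph set" where
  "U_set s = {E. unicyclic (length s) E \<and> deg_seq (length s) E = s}"

text \<open>A 2-switch is given by a matrix (a b; c d), encoded as a 4-tuple.\<close>
definition interchangeable :: "graph \<Rightarrow> nat \<times> nat \<times> nat \<times> nat \<Rightarrow> bool" where
  "interchangeable E A = (case A of (a, b, c, d) \<Rightarrow>
      adj E a b \<and> adj E c d \<and> {a, b} \<inter> {c, d} = {} \<and> \<not> adj E a c \<and> \<not> adj E b d)"

definition two_switch :: "nat \<times> nat \<times> nat \<times> nat \<Rightarrow> graph \<Rightarrow> graph" where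
  "two_switch A E = (case A of (a, b, c, d) \<Rightarrow>
      if interchangeable E A then (E - {{a, b}, {c, d}}) \<union> {{a, c}, {b, d}} else E)"

definition u_switch :: "nat \<Rightarrow> nat \<times> nat \<times> nat \<times> nat \<Rightarrow> graph \<Rightarrow> bool" where
  "u_switch n A U \<longleftrightarrow> interchangeable U A \<and> unicyclic n (two_switch A U)"

fun apply_switches :: "(nat \<times> nat \<times> nat \<times> nat) list \<Rightarrow> graph \<Rightarrow> graph" where
  "apply_switches [] U = U"
| "apply_switches (A # As) U = apply_switches As (two_switch A U)"

fun u_switch_seq :: "nat \<Rightarrow> (nat \<times> nat \<times> nat \<times> nat) list \<Rightarrow> graph \<Rightarrow> bool" where
  "u_switch_seq n [] U = True"
| "u_switch_seq n (A # As) U = (u_switch n A U \<and> u_switch_seq n As (two_switch A U))"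

end

theory Submission
  imports Defs
begin


definition sg :: "nat set \<Rightarrow> graph \<Rightarrow> bool" where
  "sg V E \<longleftrightarrow> (\<forall>e\<in>E. \<exists>a b. e = {a,b} \<and> a \<noteq> b \<and> a \<in> V \<and> b \<in> V)"

definition conn :: "nat set \<Rightarrow> graph \<Rightarrow> bool" where
  "conn V E \<longleftrightarrow> (\<forall>u\<in>V. \<forall>v\<in>V. (adj E)\<^sup>*\<^sup>* u v)"

definition uni :: "nat set \<Rightarrow> graph \<Rightarrow> bool" where
  "uni V E \<longleftrightarrow> finite V \<and> V \<noteq> {} \<and> sg V E \<and> conn V E \<and> card E = card V"

definition nbrs :: "graph \<Rightarrow> nat \<Rightarrow> nat set" where
  "nbrs E v = {u. {v,u} \<in> E}"

lemma adj_sym: "adj E u v = adj E v u"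
  by (simp add: adj_def insert_commute)

lemma R_sym: "(adj E)\<^sup>*\<^sup>* u v \<Longrightarrow> (adj E)\<^sup>*\<^sup>* v u"
proof (induction rule: rtranclp_induct)
  case base then show ?case by simp
next
  case (step y z)
  have "adj E z y" using step(2) unfolding adj_def by (simp add: insert_commute)
  then show ?case using step(3) by (rule converse_rtranclp_into_rtranclp)
qed

lemma R_mono:
  assumes "E \<subseteq> F" "(adj E)\<^sup>*\<^sup>* u v" shows "(adj F)\<^sup>*\<^sup>* u v"
  using assms(2)
proof (induction rule: rtranclp_induct)
  case base then show ?case by simp
next
  case (step y z)
  have "adj F y z" using step(2) assms(1) by (auto simp: adj_def)
  then show ?case by (rule rtranclp.rtrancl_into_rtrancl[OF step(3)])
qed

lemma R_edge: "{u,v} \<in> E \<Longrightarrow> (adj E)\<^sup>*\<^sup>* u v"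
  by (simp add: adj_def r_into_rtranclp)

lemma sg_Pow: "sg V E \<Longrightarrow> E \<subseteq> Pow V"
  unfolding sg_def by auto

lemma sg_finite: "finite V \<Longrightarrow> sg V E \<Longrightarrow> finite E"
  using sg_Pow finite_subset by (metis finite_Pow_iff)

lemma sg_edge: "sg V E \<Longrightarrow> e \<in> E \<Longrightarrow> \<exists>a b. e = {a,b} \<and> a \<noteq> b \<and> a \<in> V \<and> b \<in> V"
  unfolding sg_def by (drule bspec)

lemma sg_edgeE:
  assumes "sg V E" "e \<in> E"
  obtains a b where "e = {a,b}" "a \<noteq> b" "a \<in> V" "b \<in> V"
  using sg_edge[OF assms] by (elim exE conjE)

lemma sg_adj: "sg V E \<Longrightarrow> {u,v} \<in> E \<Longrightarrow> u \<noteq> v \<and> u \<in> V \<and> v \<in> V"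
proof -
  assume a: "sg V E" "{u,v} \<in> E"
  then obtain x y where "{u,v} = {x,y}" "x \<noteq> y" "x \<in> V" "y \<in> V" using sg_edge by metis
  then show ?thesis by (auto simp: doubleton_eq_iff)
qed

lemma sg_mono: "sg V E \<Longrightarrow> F \<subseteq> E \<Longrightarrow> sg V F"
  unfolding sg_def by auto

lemma sg_nbrs_sub: "sg V E \<Longrightarrow> nbrs E v \<subseteq> V"
  unfolding nbrs_def using sg_adj by blast

lemma degree_nbrs:
  assumes "sg V E" "finite E"
  shows "degree E v = card (nbrs E v)"
proof -
  have eq: "{e \<in> E. v \<in> e} = (\<lambda>u. {v,u}) ` nbrs E v"
  proof
    show "{e \<in> E. v \<in> e} \<subseteq> (\<lambda>u. {v,u}) ` nbrs E v"
    proof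
      fix e assume "e \<in> {e \<in> E. v \<in> e}"
      then have e: "e \<in> E" "v \<in> e" by auto
      then obtain a b where ab: "e = {a,b}" using sg_edge[OF assms(1)] by blast
      then have "e = {v, (if a = v then b else a)}" using e by auto
      then show "e \<in> (\<lambda>u. {v,u}) ` nbrs E v" unfolding nbrs_def using e by blast
    qed
  next
    show "(\<lambda>u. {v,u}) ` nbrs E v \<subseteq> {e \<in> E. v \<in> e}" unfolding nbrs_def by auto
  qed
  have inj: "inj_on (\<lambda>u. {v,u}) (nbrs E v)"
    by (rule inj_onI) (auto simp: doubleton_eq_iff)
  show ?thesis unfolding degree_def eq using card_image[OF inj] by simp
qed

lemma finite_nbrs: "finite V \<Longrightarrow> sg V E \<Longrightarrow> finite (nbrs E v)"
  by (rule finite_subset[OF sg_nbrs_sub]) simp_all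

lemma nbrs_iff: "u \<in> nbrs E v \<longleftrightarrow> {v,u} \<in> E"
  by (simp add: nbrs_def)

lemma walk_R: "is_walk E p \<Longrightarrow> (adj E)\<^sup>*\<^sup>* (hd p) (last p)"
proof (induction E p rule: is_walk.induct)
  case (3 E u v vs)
  then show ?case by (auto intro: converse_rtranclp_into_rtranclp)
qed auto

lemma walk_nth: "is_walk E p \<longleftrightarrow> p \<noteq> [] \<and> (\<forall>i. Suc i < length p \<longrightarrow> adj E (p!i) (p!Suc i))"
proof (induction E p rule: is_walk.induct)
  case (3 E u v vs)
  show ?case
  proof
    assume "is_walk E (u # v # vs)"
    then show "u # v # vs \<noteq> [] \<and> (\<forall>i. Suc i < length (u # v # vs) \<longrightarrow> adj E ((u # v # vs) ! i) ((u # v # vs) ! Suc i))"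
      using 3 by (auto simp: less_Suc_eq_0_disj)
  next
    assume a: "u # v # vs \<noteq> [] \<and> (\<forall>i. Suc i < length (u # v # vs) \<longrightarrow> adj E ((u # v # vs) ! i) ((u # v # vs) ! Suc i))"
    then have "adj E u v" by force
    moreover have "is_walk E (v # vs)" using 3 a by force
    ultimately show "is_walk E (u # v # vs)" by simp
  qed
qed auto

lemma walk_mono:
  assumes "is_walk E p" "\<And>i. Suc i < length p \<Longrightarrow> {p!i, p!Suc i} \<in> F"
  shows "is_walk F p"
  using assms unfolding walk_nth by (auto simp: adj_def)

lemma walk_drop: "is_walk E (p @ q) \<Longrightarrow> q \<noteq> [] \<Longrightarrow> is_walk E q"
proof (induction p)
  case (Cons a p)
  then show ?case by (cases p; cases q) auto
qed auto

lemma R_walk: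
  assumes "(adj E)\<^sup>*\<^sup>* a b"
  shows "\<exists>p. is_walk E p \<and> distinct p \<and> hd p = a \<and> last p = b"
  using assms
proof (induction rule: converse_rtranclp_induct)
  case base
  then show ?case by (rule exI[of _ "[b]"]) simp
next
  case (step a a1)
  then obtain p where p: "is_walk E p" "distinct p" "hd p = a1" "last p = b" by blast
  then obtain p' where pp: "p = a1 # p'" by (cases p) auto
  show ?case
  proof (cases "a \<in> set p")
    case False
    then show ?thesis using step p pp by (intro exI[of _ "a # p"]) auto
  next
    case True
    then obtain q1 q2 where q: "p = q1 @ a # q2" by (meson split_list)
    have "is_walk E (a # q2)" using walk_drop p(1) q by force
    moreover have "distinct (a # q2)" using p(2) q by simp
    moreover have "last (a # q2) = b" using p(4) q by (metis last_appendR list.simps(3))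
    ultimately show ?thesis by (intro exI[of _ "a # q2"]) auto
  qed
qed

lemma walk_avoid_R:
  assumes "is_walk E p" "\<And>i. Suc i < length p \<Longrightarrow> {p!i, p!Suc i} \<in> F"
  shows "(adj F)\<^sup>*\<^sup>* (hd p) (last p)"
  using walk_R walk_mono assms by blast

lemma connected_conn: "connected n E \<longleftrightarrow> conn {1..n} E"
proof
  assume a: "connected n E"
  show "conn {1..n} E" unfolding conn_def
  proof (intro ballI)
    fix u v assume "u \<in> {1..n}" "v \<in> {1..n}"
    then obtain p where "is_walk E p" "hd p = u" "last p = v" using a unfolding connected_def by blast
    then show "(adj E)\<^sup>*\<^sup>* u v" using walk_R by blast
  qed
next
  assume a: "conn {1..n} E"
  show "connected n E" unfolding connected_def
  proof (intro ballI)
    fix u v assume "u \<in> {1..n}" "v \<in> {1..n}"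
    then have "(adj E)\<^sup>*\<^sup>* u v" using a unfolding conn_def by blast
    then obtain p where "is_walk E p" "hd p = u" "last p = v" using R_walk by blast
    then show "\<exists>p. is_walk E p \<and> hd p = u \<and> last p = v" by blast
  qed
qed

lemma simple_sg: "simple_graph n E \<longleftrightarrow> sg {1..n} E"
proof
  assume a: "simple_graph n E"
  show "sg {1..n} E" unfolding sg_def
  proof
    fix e assume "e \<in> E"
    then have "e \<subseteq> {1..n}" "card e = 2" using a unfolding simple_graph_def by auto
    then obtain x y where "e = {x,y}" "x \<noteq> y" using card_2_iff by metis
    then show "\<exists>a b. e = {a,b} \<and> a \<noteq> b \<and> a \<in> {1..n} \<and> b \<in> {1..n}"
      using \<open>e \<subseteq> {1..n}\<close> by blast
  qed
next
  assume a: "sg {1..n} E"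
  show "simple_graph n E" unfolding simple_graph_def
  proof
    fix e assume "e \<in> E"
    then obtain x y where "e = {x,y}" "x \<noteq> y" "x \<in> {1..n}" "y \<in> {1..n}"
      using a sg_edge by metis
    then show "e \<subseteq> {1..n} \<and> card e = 2" by simp
  qed
qed

lemma walk_internal:
  assumes "is_walk E p" "distinct p" "0 < j" "Suc j < length p"
  shows "{p!(j-1), p!j} \<in> E \<and> {p!j, p!Suc j} \<in> E \<and> p!(j-1) \<noteq> p!Suc j"
proof -
  have s: "Suc (j-1) < length p" using assms by simp
  have "adj E (p!(j-1)) (p!(Suc (j-1)))" using assms(1) s unfolding walk_nth by blast
  then have "{p!(j-1), p!j} \<in> E" using assms(3) by (simp add: adj_def)
  moreover have "{p!j, p!Suc j} \<in> E" using assms walk_nth adj_def by metis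
  moreover have "p!(j-1) \<noteq> p!Suc j"
  proof
    assume "p!(j-1) = p!Suc j"
    then have "j - 1 = Suc j" using assms(2) nth_eq_iff_index_eq[OF assms(2)] assms(4) by simp
    then show False by simp
  qed
  ultimately show ?thesis by blast
qed

lemma internal_two_nbrs:
  assumes "is_walk E p" "distinct p" "0 < j" "Suc j < length p"
  shows "p!(j-1) \<in> nbrs E (p!j) \<and> p!Suc j \<in> nbrs E (p!j) \<and> p!(j-1) \<noteq> p!Suc j"
  using walk_internal[OF assms] by (simp add: nbrs_def insert_commute)



lemma no_loop: "sg V E \<Longrightarrow> {v} \<notin> E"
  using sg_adj[of V E v v] by auto

lemma degree_pos_nbr:
  assumes "sg V E" "finite E" "degree E v \<ge> 1"
  shows "\<exists>x. x \<in> nbrs E v"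
  using assms degree_nbrs[OF assms(1,2)] by (metis card.empty ex_in_conv not_one_le_zero)

lemma degree_one:
  assumes "sg V E" "finite E" "degree E v = 1"
  shows "\<exists>x. nbrs E v = {x}"
proof -
  have "card (nbrs E v) = 1" using degree_nbrs[OF assms(1,2)] assms(3) by simp
  then show ?thesis by (simp add: card_1_singleton_iff)
qed

lemma leaf_edges:
  assumes "sg V E" "nbrs E v = {x}"
  shows "{e \<in> E. v \<in> e} = {{v,x}}"
proof
  show "{e \<in> E. v \<in> e} \<subseteq> {{v,x}}"
  proof
    fix e assume e: "e \<in> {e \<in> E. v \<in> e}"
    then have eE: "e \<in> E" by simp
    obtain a b where ab: "e = {a,b}" "a \<noteq> b" "a \<in> V" "b \<in> V" by (rule sg_edgeE[OF assms(1) eE])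
    have "v = a \<or> v = b" using e ab by auto
    then show "e \<in> {{v,x}}"
    proof
      assume "v = a"
      then have "b \<in> nbrs E v" using e ab by (simp add: nbrs_iff)
      then show ?thesis using assms(2) ab \<open>v = a\<close> by simp
    next
      assume "v = b"
      then have "a \<in> nbrs E v" using e ab by (simp add: nbrs_iff insert_commute)
      then show ?thesis using assms(2) ab \<open>v = b\<close> by (simp add: insert_commute)
    qed
  qed
next
  have "{v,x} \<in> E" using assms(2) nbrs_iff by (metis singletonI)
  then show "{{v,x}} \<subseteq> {e \<in> E. v \<in> e}" by simp
qed

lemma leaf_R_aux:
  assumes "sg V E" "nbrs E v = {x}" "(adj E)\<^sup>*\<^sup>* u w" "u \<noteq> v"
  shows "(w \<noteq> v \<longrightarrow> (adj (E - {{v,x}}))\<^sup>*\<^sup>* u w) \<and> (w = v \<longrightarrow> (adj (E - {{v,x}}))\<^sup>*\<^sup>* u x)"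
  using assms(3)
proof (induction rule: rtranclp_induct)
  case base
  then show ?case using assms(4) by simp
next
  case (step z w)
  have zw: "{z,w} \<in> E" using step(2) by (simp add: adj_def)
  show ?case
  proof (cases "z = v")
    case True
    then have "w \<in> nbrs E v" using zw by (simp add: nbrs_iff)
    then have "w = x" using assms(2) by simp
    moreover have "x \<noteq> v" using assms(1,2) sg_adj nbrs_iff by (metis singletonI)
    ultimately show ?thesis using step(3) True by simp
  next
    case False
    then have Rz: "(adj (E - {{v,x}}))\<^sup>*\<^sup>* u z" using step(3) by simp
    show ?thesis
    proof (cases "w = v")
      case True
      then have "z \<in> nbrs E v" using zw by (simp add: nbrs_iff insert_commute)
      then have "z = x" using assms(2) by simp
      then show ?thesis using Rz True by simp
    next
      case False
      have "{z,w} \<noteq> {v,x}" using False \<open>z \<noteq> v\<close> by (auto simp: doubleton_eq_iff)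
      then have "adj (E - {{v,x}}) z w" using zw by (simp add: adj_def)
      then show ?thesis using Rz False by (simp add: rtranclp.rtrancl_into_rtrancl)
    qed
  qed
qed

lemma leaf_remove:
  assumes "sg V E" "conn V E" "v \<in> V" "nbrs E v = {x}"
  shows "sg (V - {v}) (E - {{v,x}}) \<and> conn (V - {v}) (E - {{v,x}})"
proof
  show "sg (V - {v}) (E - {{v,x}})" unfolding sg_def
  proof
    fix e assume e: "e \<in> E - {{v,x}}"
    then have eE: "e \<in> E" by simp
    obtain a b where ab: "e = {a,b}" "a \<noteq> b" "a \<in> V" "b \<in> V" by (rule sg_edgeE[OF assms(1) eE])
    have "v \<notin> e"
    proof
      assume "v \<in> e"
      then have "e \<in> {e \<in> E. v \<in> e}" using e by simp
      then show False using leaf_edges[OF assms(1,4)] e by simp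
    qed
    then show "\<exists>a b. e = {a, b} \<and> a \<noteq> b \<and> a \<in> V - {v} \<and> b \<in> V - {v}" using ab by auto
  qed
next
  show "conn (V - {v}) (E - {{v,x}})" unfolding conn_def
  proof (intro ballI)
    fix u w assume "u \<in> V - {v}" "w \<in> V - {v}"
    then show "(adj (E - {{v,x}}))\<^sup>*\<^sup>* u w"
      using leaf_R_aux[OF assms(1,4)] assms(2) unfolding conn_def by blast
  qed
qed

lemma double_count:
  assumes "finite B" "finite E"
  shows "(\<Sum>u\<in>B. card {e\<in>E. u \<in> e}) = (\<Sum>e\<in>E. card (e \<inter> B))"
proof -
  have 1: "card {e\<in>E. u \<in> e} = (\<Sum>e\<in>E. if u \<in> e then 1 else 0)" for u
    using assms(2) by (simp add: sum.inter_filter[symmetric])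
  have 2: "card (e \<inter> B) = (\<Sum>u\<in>B. if u \<in> e then 1 else 0)" for e
  proof -
    have "e \<inter> B = {u \<in> B. u \<in> e}" by auto
    then show ?thesis using assms(1) by (simp add: sum.inter_filter[symmetric])
  qed
  show ?thesis unfolding 1 2 by (rule sum.swap)
qed

lemma handshake:
  assumes "finite V" "sg V E"
  shows "(\<Sum>u\<in>V. degree E u) = 2 * card E"
proof -
  have fE: "finite E" using sg_finite assms by blast
  have "(\<Sum>u\<in>V. degree E u) = (\<Sum>e\<in>E. card (e \<inter> V))"
    unfolding degree_def using double_count[OF assms(1) fE] .
  also have "\<dots> = (\<Sum>e\<in>E. 2)"
  proof (rule sum.cong)
    fix e assume "e \<in> E"
    obtain a b where "e = {a,b}" "a \<noteq> b" "a \<in> V" "b \<in> V" by (rule sg_edgeE[OF assms(2) \<open>e \<in> E\<close>])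
    then show "card (e \<inter> V) = 2" by simp
  qed simp
  finally show ?thesis by simp
qed

lemma R_first_step:
  assumes "(adj E)\<^sup>*\<^sup>* v u" "v \<noteq> u"
  shows "\<exists>w. adj E v w"
  using assms by (metis converse_rtranclpE)

lemma conn_card:
  assumes "finite V" "V \<noteq> {}" "sg V E" "conn V E"
  shows "card V \<le> card E + 1"
  using assms
proof (induction "card V" arbitrary: V E rule: less_induct)
  case less
  have fE: "finite E" using sg_finite less by blast
  show ?case
  proof (cases "\<exists>v\<in>V. degree E v = 1")
    case True
    then obtain v where v: "v \<in> V" "degree E v = 1" by blast
    then obtain x where x: "nbrs E v = {x}" using degree_one[OF less(4) fE] by blast
    have xE: "{v,x} \<in> E" using x nbrs_iff by (metis singletonI)
    then have xV: "x \<in> V" "x \<noteq> v" using sg_adj[OF less(4)] by auto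
    have r: "sg (V - {v}) (E - {{v,x}}) \<and> conn (V - {v}) (E - {{v,x}})"
      using leaf_remove[OF less(4,5) v(1) x] .
    have lt: "card (V - {v}) < card V" using less(2) v(1) by (rule card_Diff1_less)
    have ne: "V - {v} \<noteq> {}" using xV v(1) by blast
    have fV': "finite (V - {v})" using less(2) by simp
    have "card (V - {v}) \<le> card (E - {{v,x}}) + 1"
      using less(1)[OF lt fV' ne] r by blast
    moreover have "card (V - {v}) = card V - 1" using v(1) by (simp add: card_Diff_singleton)
    moreover have "card (E - {{v,x}}) = card E - 1" using xE by (simp add: card_Diff_singleton)
    moreover have "card E \<ge> 1" using fE xE by (auto simp: card_gt_0_iff Suc_le_eq)
    moreover have "card V \<ge> 1" using less(2) v(1) by (auto simp: card_gt_0_iff Suc_le_eq)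
    ultimately show ?thesis by linarith
  next
    case False
    show ?thesis
    proof (cases "card V = 1")
      case True then show ?thesis by simp
    next
      case c: False
      have deg2: "degree E v \<ge> 2" if "v \<in> V" for v
      proof -
        have "card V > 0" using less(2,3) by (simp add: card_gt_0_iff)
        then have c2: "card V \<ge> 2" using c by linarith
        have "\<not> V \<subseteq> {v}"
        proof
          assume "V \<subseteq> {v}"
          then have "card V \<le> card {v}" by (intro card_mono) simp_all
          then show False using c2 by simp
        qed
        then obtain u where u: "u \<in> V" "u \<noteq> v" by blast
        have "(adj E)\<^sup>*\<^sup>* v u" using less(5) that u unfolding conn_def by blast
        then obtain w where "adj E v w" using R_first_step u by blast
        then have "w \<in> nbrs E v" by (simp add: adj_def nbrs_iff)
        then have "card (nbrs E v) \<ge> 1"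
          using finite_nbrs[OF less(2,4)] by (metis One_nat_def Suc_leI card_gt_0_iff empty_iff)
        then have "degree E v \<ge> 1" using degree_nbrs[OF less(4) fE] by simp
        then show ?thesis using False that by fastforce
      qed
      have "(\<Sum>u\<in>V. 2) \<le> (\<Sum>u\<in>V. degree E u)" using deg2 by (meson sum_mono)
      then have "2 * card V \<le> 2 * card E" using handshake[OF less(2,4)] by simp
      then show ?thesis by simp
    qed
  qed
qed



lemma find_cycle:
  assumes "finite V" "V \<noteq> {}" "sg V E" "\<forall>v\<in>V. degree E v \<ge> 2"
  shows "\<exists>vs. is_cycle E vs"
proof -
  have fE: "finite E" using sg_finite assms by blast
  define P where "P = (\<lambda>p. is_walk E p \<and> distinct p \<and> set p \<subseteq> V)"
  obtain v0 where v0: "v0 \<in> V" using assms(2) by blast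
  have P0: "P [v0]" unfolding P_def using v0 by simp
  have bound: "\<forall>p. P p \<longrightarrow> length p < card V + 1"
  proof (intro allI impI)
    fix p assume "P p"
    then have "card (set p) \<le> card V" "card (set p) = length p"
      unfolding P_def using card_mono[OF assms(1)] distinct_card by auto
    then show "length p < card V + 1" by simp
  qed
  obtain p where p: "P p" and pmax: "\<forall>q. P q \<longrightarrow> length q \<le> length p"
    using Lattices_Big.ex_has_greatest_nat[of P "[v0]" length "card V + 1"] P0 bound by blast
  have pw: "is_walk E p" "distinct p" "set p \<subseteq> V" using p unfolding P_def by auto
  then obtain u rest where pu: "p = u # rest" by (cases p) auto
  have uV: "u \<in> V" using pw(3) pu by simp
  have inp: "z \<in> set p" if z: "z \<in> nbrs E u" for z
  proof (rule ccontr)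
    assume zn: "z \<notin> set p"
    have "adj E z u" using z by (simp add: nbrs_iff adj_def insert_commute)
    then have "is_walk E (z # u # rest)" using pw(1) pu by simp
    moreover have "z \<in> V" using z sg_nbrs_sub[OF assms(3)] by blast
    ultimately have "P (z # p)" unfolding P_def using pw zn pu by simp
    then have "length (z # p) \<le> length p" using pmax by blast
    then show False by simp
  qed
  have fN: "finite (nbrs E u)" using finite_nbrs[OF assms(1,3)] .
  have cN: "card (nbrs E u) \<ge> 2" using assms(4) uV degree_nbrs[OF assms(3) fE] by simp
  then have "nbrs E u \<noteq> {}" by auto
  then obtain z1 where z1: "z1 \<in> nbrs E u" by blast
  have "card (nbrs E u - {z1}) \<ge> 1" using cN z1 fN by (simp add: card_Diff_singleton)
  then have "nbrs E u - {z1} \<noteq> {}" by (metis card.empty not_one_le_zero)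
  then obtain z2 where z2: "z2 \<in> nbrs E u" "z2 \<noteq> z1" by blast
  have idx: "\<exists>j. 0 < j \<and> j < length p \<and> p ! j = z" if zz: "z \<in> nbrs E u" for z
  proof -
    obtain j where j: "j < length p" "p ! j = z" using inp[OF zz] by (meson in_set_conv_nth)
    have "z \<noteq> u" using zz sg_adj[OF assms(3), of u z] by (auto simp: nbrs_iff)
    then have "j \<noteq> 0" using j pu by (metis nth_Cons_0)
    then show ?thesis using j by blast
  qed
  obtain j where j: "2 \<le> j" "j < length p" "{u, p ! j} \<in> E"
  proof -
    obtain j1 where j1: "0 < j1" "j1 < length p" "p ! j1 = z1" using idx z1 by blast
    obtain j2 where j2: "0 < j2" "j2 < length p" "p ! j2 = z2" using idx z2(1) by blast
    have "j1 \<noteq> j2" using j1 j2 z2(2) by auto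
    then have "2 \<le> j1 \<or> 2 \<le> j2" using j1(1) j2(1) by linarith
    then show ?thesis using that j1 j2 z1 z2 by (auto simp: nbrs_iff)
  qed
  define vs where "vs = take (Suc j) p"
  have lvs: "length vs = Suc j" unfolding vs_def using j by simp
  have "is_cycle E vs" unfolding is_cycle_def
  proof (intro conjI)
    show "3 \<le> length vs" using lvs j by simp
    show "distinct vs" unfolding vs_def using pw(2) by simp
    show "cycle_edges vs \<subseteq> E" unfolding cycle_edges_def
    proof clarify
      fix i assume i: "i < length vs"
      show "{vs ! i, vs ! ((i + 1) mod length vs)} \<in> E"
      proof (cases "i < j")
        case True
        then have m: "(i + 1) mod length vs = Suc i" using lvs by simp
        have "adj E (p!i) (p!Suc i)" using pw(1) True j(2) unfolding walk_nth by simp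
        moreover have "vs ! i = p ! i" unfolding vs_def using True by simp
        moreover have "vs ! Suc i = p ! Suc i" unfolding vs_def using True by simp
        ultimately show ?thesis unfolding m by (simp add: adj_def)
      next
        case False
        then have ij: "i = j" using i lvs by simp
        then have m: "(i + 1) mod length vs = 0" using lvs by simp
        have "vs ! 0 = u" unfolding vs_def using pu by simp
        moreover have "vs ! i = p ! j" unfolding vs_def using ij by simp
        ultimately show ?thesis unfolding m using j(3) by (simp add: insert_commute)
      qed
    qed
  qed
  then show ?thesis by blast
qed

lemma is_cycle_mono: "is_cycle F vs \<Longrightarrow> F \<subseteq> E \<Longrightarrow> is_cycle E vs"
  unfolding is_cycle_def by auto

lemma forest_card:
  assumes "finite V" "V \<noteq> {}" "sg V E" "\<forall>vs. \<not> is_cycle E vs"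
  shows "card E + 1 \<le> card V"
  using assms
proof (induction "card V" arbitrary: V E rule: less_induct)
  case less
  have fE: "finite E" using sg_finite less by blast
  show ?case
  proof (cases "\<exists>v\<in>V. degree E v = 0")
    case True
    then obtain v where v: "v \<in> V" "degree E v = 0" by blast
    have none: "{e \<in> E. v \<in> e} = {}" using v(2) fE unfolding degree_def by simp
    have sg': "sg (V - {v}) E" unfolding sg_def
    proof
      fix e assume e: "e \<in> E"
      obtain a b where ab: "e = {a,b}" "a \<noteq> b" "a \<in> V" "b \<in> V" by (rule sg_edgeE[OF less(4) e])
      have "v \<notin> e" using none e by blast
      then show "\<exists>a b. e = {a, b} \<and> a \<noteq> b \<and> a \<in> V - {v} \<and> b \<in> V - {v}" using ab by auto
    qed
    show ?thesis
    proof (cases "V - {v} = {}")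
      case True
      have "E = {}"
      proof (rule ccontr)
        assume "E \<noteq> {}"
        then obtain e where e: "e \<in> E" by blast
        obtain a b where ab: "e = {a,b}" "a \<noteq> b" "a \<in> V - {v}" "b \<in> V - {v}" by (rule sg_edgeE[OF sg' e])
        then show False using True by simp
      qed
      moreover have "V = {v}" using True v(1) by blast
      then have "card V = 1" by simp
      ultimately show ?thesis by simp
    next
      case False
      have lt: "card (V - {v}) < card V" using less(2) v(1) by (rule card_Diff1_less)
      have fV': "finite (V - {v})" using less(2) by simp
      have "card E + 1 \<le> card (V - {v})" using less(1)[OF lt fV' False sg' less(5)] .
      then show ?thesis using lt by linarith
    qed
  next
    case False
    show ?thesis
    proof (cases "\<exists>v\<in>V. degree E v = 1")
      case True
      then obtain v where v: "v \<in> V" "degree E v = 1" by blast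
      then obtain x where x: "nbrs E v = {x}" using degree_one[OF less(4) fE] by blast
      have xE: "{v,x} \<in> E" using x nbrs_iff by (metis singletonI)
      then have xV: "x \<in> V" "x \<noteq> v" using sg_adj[OF less(4)] by auto
      have sg': "sg (V - {v}) (E - {{v,x}})"
      proof -
        have "conn V E \<Longrightarrow> ?thesis" using leaf_remove[OF less(4) _ v(1) x] by blast
        show ?thesis unfolding sg_def
        proof
          fix e assume e: "e \<in> E - {{v,x}}"
          then have eE: "e \<in> E" by simp
          obtain a b where ab: "e = {a,b}" "a \<noteq> b" "a \<in> V" "b \<in> V" by (rule sg_edgeE[OF less(4) eE])
          have "v \<notin> e"
          proof
            assume "v \<in> e"
            then have "e \<in> {e \<in> E. v \<in> e}" using e by simp
            then show False using leaf_edges[OF less(4) x] e by simp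
          qed
          then show "\<exists>a b. e = {a, b} \<and> a \<noteq> b \<and> a \<in> V - {v} \<and> b \<in> V - {v}" using ab by auto
        qed
      qed
      have ac: "\<forall>vs. \<not> is_cycle (E - {{v,x}}) vs" using less(5) is_cycle_mono by blast
      have lt: "card (V - {v}) < card V" using less(2) v(1) by (rule card_Diff1_less)
      have ne: "V - {v} \<noteq> {}" using xV v(1) by blast
      have fV': "finite (V - {v})" using less(2) by simp
      have "card (E - {{v,x}}) + 1 \<le> card (V - {v})" using less(1)[OF lt fV' ne sg' ac] .
      moreover have "card (V - {v}) = card V - 1" using v(1) by (simp add: card_Diff_singleton)
      moreover have "card (E - {{v,x}}) = card E - 1" using xE by (simp add: card_Diff_singleton)
      moreover have "card E \<ge> 1" using fE xE by (auto simp: card_gt_0_iff Suc_le_eq)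
      ultimately show ?thesis by linarith
    next
      case False2: False
      have "\<forall>v\<in>V. degree E v \<ge> 2" using False False2 by fastforce
      then show ?thesis using find_cycle[OF less(2,3,4)] less(5) by blast
    qed
  qed
qed

lemma cycle_edge_nth: "is_cycle E vs \<Longrightarrow> Suc t < length vs \<Longrightarrow> {vs!t, vs!Suc t} \<in> E"
proof -
  assume a: "is_cycle E vs" "Suc t < length vs"
  have "{vs ! t, vs ! ((t + 1) mod length vs)} \<in> cycle_edges vs"
    unfolding cycle_edges_def using a(2) by auto
  then show ?thesis using a unfolding is_cycle_def by auto
qed

lemma cycle_last_edge: "is_cycle E vs \<Longrightarrow> {vs!(length vs - 1), vs!0} \<in> E"
proof -
  assume a: "is_cycle E vs"
  then have l: "length vs \<ge> 3" unfolding is_cycle_def by simp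
  have "{vs ! (length vs - 1), vs ! ((length vs - 1 + 1) mod length vs)} \<in> cycle_edges vs"
    unfolding cycle_edges_def using l by (intro CollectI exI[of _ "length vs - 1"]) auto
  moreover have "(length vs - 1 + 1) mod length vs = 0"
  proof -
    have "length vs - 1 + 1 = length vs" using l by simp
    then show ?thesis by (metis mod_self)
  qed
  ultimately show ?thesis using a unfolding is_cycle_def by auto
qed

lemma cycle_seg:
  assumes "b < length vs" "a \<le> b" "\<And>t. a \<le> t \<Longrightarrow> t < b \<Longrightarrow> {vs!t, vs!Suc t} \<in> F"
  shows "(adj F)\<^sup>*\<^sup>* (vs!a) (vs!b)"
  using assms
proof (induction b)
  case 0 then show ?case by simp
next
  case (Suc b)
  show ?case
  proof (cases "a = Suc b")
    case True then show ?thesis by simp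
  next
    case False
    then have "(adj F)\<^sup>*\<^sup>* (vs!a) (vs!b)" using Suc by simp
    moreover have "adj F (vs!b) (vs!Suc b)" using Suc.prems(3)[of b] Suc.prems(2) False by (simp add: adj_def)
    ultimately show ?thesis by (rule rtranclp.rtrancl_into_rtrancl)
  qed
qed

lemma cycle_edge_R:
  assumes "is_cycle E vs" "e \<in> cycle_edges vs"
  shows "\<exists>p q. e = {p,q} \<and> (adj (E - {e}))\<^sup>*\<^sup>* p q"
proof -
  define L where "L = length vs"
  have L3: "L \<ge> 3" and dis: "distinct vs" using assms(1) unfolding is_cycle_def L_def by auto
  obtain i where i: "i < L" "e = {vs!i, vs!((i+1) mod L)}" using assms(2) unfolding cycle_edges_def L_def by blast
  have nth_inj: "vs!x = vs!y \<longleftrightarrow> x = y" if "x < L" "y < L" for x y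
    using dis that nth_eq_iff_index_eq L_def by blast
  show ?thesis
  proof (cases "i = L - 1")
    case True
    then have e: "e = {vs!(L-1), vs!0}" using i L3 by simp
    have "(adj (E - {e}))\<^sup>*\<^sup>* (vs!0) (vs!(L-1))"
    proof (rule cycle_seg)
      show "L - 1 < length vs" using L3 L_def by simp
      fix t assume t: "0 \<le> t" "t < L - 1"
      have "{vs!t, vs!Suc t} \<in> E" using cycle_edge_nth[OF assms(1)] t L_def by simp
      moreover have "{vs!t, vs!Suc t} \<noteq> e"
      proof
        assume "{vs!t, vs!Suc t} = e"
        then have "(vs!t = vs!(L-1) \<and> vs!Suc t = vs!0) \<or> (vs!t = vs!0 \<and> vs!Suc t = vs!(L-1))"
          unfolding e by (auto simp: doubleton_eq_iff)
        then show False using nth_inj t L3 by auto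
      qed
      ultimately show "{vs!t, vs!Suc t} \<in> E - {e}" by simp
    qed simp
    then show ?thesis using e by (intro exI[of _ "vs!0"] exI[of _ "vs!(L-1)"]) (auto simp: insert_commute)
  next
    case False
    then have iL: "Suc i < L" using i by simp
    then have e: "e = {vs!i, vs!Suc i}" using i by simp
    have ne: "{vs!t, vs!Suc t} \<noteq> e" if "t \<noteq> i" "Suc t < L" for t
    proof
      assume "{vs!t, vs!Suc t} = e"
      then have "(vs!t = vs!i \<and> vs!Suc t = vs!Suc i) \<or> (vs!t = vs!Suc i \<and> vs!Suc t = vs!i)"
        unfolding e by (auto simp: doubleton_eq_iff)
      then show False using nth_inj that iL by auto
    qed
    have r1: "(adj (E - {e}))\<^sup>*\<^sup>* (vs!0) (vs!i)"
    proof (rule cycle_seg)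
      show "i < length vs" using i L_def by simp
      fix t assume t: "0 \<le> t" "t < i"
      then show "{vs!t, vs!Suc t} \<in> E - {e}" using cycle_edge_nth[OF assms(1)] ne[of t] iL L_def by simp
    qed simp
    have r2: "(adj (E - {e}))\<^sup>*\<^sup>* (vs!Suc i) (vs!(L-1))"
    proof (rule cycle_seg)
      show "L - 1 < length vs" using L3 L_def by simp
      show "Suc i \<le> L - 1" using iL by simp
      fix t assume t: "Suc i \<le> t" "t < L - 1"
      then show "{vs!t, vs!Suc t} \<in> E - {e}" using cycle_edge_nth[OF assms(1)] ne[of t] L_def by simp
    qed
    have le: "{vs!(L-1), vs!0} \<in> E" using cycle_last_edge[OF assms(1)] L_def by simp
    have le2: "{vs!(L-1), vs!0} \<noteq> e"
    proof
      assume "{vs!(L-1), vs!0} = e"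
      then have "(vs!(L-1) = vs!i \<and> vs!0 = vs!Suc i) \<or> (vs!(L-1) = vs!Suc i \<and> vs!0 = vs!i)"
        unfolding e by (auto simp: doubleton_eq_iff)
      then show False using nth_inj iL L3 False by auto
    qed
    have "adj (E - {e}) (vs!0) (vs!(L-1))" using le le2 by (simp add: adj_def insert_commute)
    then have "(adj (E - {e}))\<^sup>*\<^sup>* (vs!i) (vs!(L-1))"
      using R_sym[OF r1] by (meson rtranclp.rtrancl_into_rtrancl)
    then have "(adj (E - {e}))\<^sup>*\<^sup>* (vs!i) (vs!Suc i)"
      using R_sym[OF r2] by (rule rtranclp_trans)
    then show ?thesis using e by blast
  qed
qed

lemma conn_remove_edge:
  assumes "conn V E" "(adj (E - {{p,q}}))\<^sup>*\<^sup>* p q"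
  shows "conn V (E - {{p,q}})"
proof -
  have "(adj (E - {{p,q}}))\<^sup>*\<^sup>* a b" if "(adj E)\<^sup>*\<^sup>* a b" for a b
    using that
  proof (induction rule: rtranclp_induct)
    case base then show ?case by simp
  next
    case (step y z)
    show ?case
    proof (cases "{y,z} = {p,q}")
      case True
      then have "(y = p \<and> z = q) \<or> (y = q \<and> z = p)" by (auto simp: doubleton_eq_iff)
      then have "(adj (E - {{p,q}}))\<^sup>*\<^sup>* y z" using assms(2) R_sym by blast
      then show ?thesis using step(3) by (meson rtranclp_trans)
    next
      case False
      then have "adj (E - {{p,q}}) y z" using step(2) by (simp add: adj_def)
      then show ?thesis using step(3) by (meson rtranclp.rtrancl_into_rtrancl)
    qed
  qed
  then show ?thesis using assms(1) unfolding conn_def by blast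
qed

lemma cycle_remove_conn:
  assumes "conn V E" "is_cycle E vs" "e \<in> cycle_edges vs"
  shows "conn V (E - {e})"
proof -
  obtain p q where "e = {p,q}" "(adj (E - {e}))\<^sup>*\<^sup>* p q" using cycle_edge_R[OF assms(2,3)] by blast
  then show ?thesis using conn_remove_edge[OF assms(1)] by blast
qed

lemma cycle_has_edge: "is_cycle E vs \<Longrightarrow> {vs!0, vs!1} \<in> cycle_edges vs"
  unfolding cycle_edges_def is_cycle_def by (intro CollectI exI[of _ 0]) auto

lemma cycle_sub: "is_cycle E vs \<Longrightarrow> cycle_edges vs \<subseteq> E"
  unfolding is_cycle_def by simp

lemma two_cycles_card:
  assumes "finite V" "V \<noteq> {}" "sg V E" "conn V E" "is_cycle E vs1" "is_cycle E vs2"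
    "e \<in> cycle_edges vs1" "e \<notin> cycle_edges vs2"
  shows "card V + 1 \<le> card E"
proof -
  have fE: "finite E" using sg_finite assms by blast
  have eE: "e \<in> E" using subsetD[OF cycle_sub[OF assms(5)] assms(7)] .
  have c1: "conn V (E - {e})" using cycle_remove_conn[OF assms(4,5,7)] .
  have cy2: "is_cycle (E - {e}) vs2" using assms(6,8) unfolding is_cycle_def by auto
  define f where "f = {vs2!0, vs2!1}"
  have f: "f \<in> cycle_edges vs2" unfolding f_def using cycle_has_edge[OF assms(6)] .
  have c2: "conn V (E - {e} - {f})" using cycle_remove_conn[OF c1 cy2 f] .
  have fE1: "f \<in> E - {e}" using subsetD[OF cycle_sub[OF cy2] f] .
  have sg2: "sg V (E - {e} - {f})" by (rule sg_mono[OF assms(3)]) auto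
  have "card V \<le> card (E - {e} - {f}) + 1" using conn_card[OF assms(1,2) sg2 c2] .
  moreover have "card (E - {e} - {f}) = card E - 2"
    using eE fE1 fE by (simp add: card_Diff_singleton)
  moreover have "card E \<ge> 2"
  proof -
    have "{e,f} \<subseteq> E" using eE fE1 by auto
    then have "card {e,f} \<le> card E" using fE by (simp add: card_mono)
    moreover have "e \<noteq> f" using fE1 by auto
    ultimately show ?thesis by simp
  qed
  ultimately show ?thesis by linarith
qed

lemma char:
  assumes "finite V" "V \<noteq> {}" "sg V E" "conn V E"
  shows "(\<exists>!C. C \<in> cycles E) \<longleftrightarrow> card E = card V"
proof
  assume u: "\<exists>!C. C \<in> cycles E"
  then obtain vs where vs: "is_cycle E vs" unfolding cycles_def by blast
  have uniq: "cycle_edges vs' = cycle_edges vs" if "is_cycle E vs'" for vs'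
    using u vs that unfolding cycles_def by blast
  have fE: "finite E" using sg_finite assms by blast
  define e where "e = {vs!0, vs!1}"
  have e: "e \<in> cycle_edges vs" unfolding e_def using cycle_has_edge[OF vs] .
  have eE: "e \<in> E" using subsetD[OF cycle_sub[OF vs] e] .
  have c1: "conn V (E - {e})" using cycle_remove_conn[OF assms(4) vs e] .
  have sg1: "sg V (E - {e})" by (rule sg_mono[OF assms(3)]) auto
  have "card V \<le> card (E - {e}) + 1" using conn_card[OF assms(1,2) sg1 c1] .
  moreover have ac: "\<forall>vs'. \<not> is_cycle (E - {e}) vs'"
  proof (intro allI notI)
    fix vs' assume a: "is_cycle (E - {e}) vs'"
    then have "is_cycle E vs'" using is_cycle_mono by blast
    then have "cycle_edges vs' = cycle_edges vs" using uniq by blast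
    then have "e \<in> cycle_edges vs'" using e by simp
    then have "e \<in> E - {e}" using subsetD[OF cycle_sub[OF a]] by blast
    then show False by simp
  qed
  have "card (E - {e}) + 1 \<le> card V" using forest_card[OF assms(1,2) sg1 ac] .
  moreover have "card (E - {e}) = card E - 1" using eE by (simp add: card_Diff_singleton)
  moreover have "card E \<ge> 1" using fE eE by (auto simp: card_gt_0_iff Suc_le_eq)
  ultimately show "card E = card V" by linarith
next
  assume c: "card E = card V"
  have ex: "\<exists>vs. is_cycle E vs"
  proof (rule ccontr)
    assume "\<not> (\<exists>vs. is_cycle E vs)"
    then have "card E + 1 \<le> card V" using forest_card[OF assms(1,2,3)] by blast
    then show False using c by simp
  qed
  then obtain vs where vs: "is_cycle E vs" by blast
  have "C = cycle_edges vs" if CC: "C \<in> cycles E" for C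
  proof (rule ccontr)
    assume ne: "C \<noteq> cycle_edges vs"
    obtain vs2 where vs2: "C = cycle_edges vs2" "is_cycle E vs2" using CC unfolding cycles_def by blast
    then have "(\<exists>e. e \<in> cycle_edges vs2 \<and> e \<notin> cycle_edges vs) \<or> (\<exists>e. e \<in> cycle_edges vs \<and> e \<notin> cycle_edges vs2)"
      using ne by blast
    then have "card V + 1 \<le> card E"
      using two_cycles_card[OF assms vs2(2) vs] two_cycles_card[OF assms vs vs2(2)] by blast
    then show False using c by simp
  qed
  moreover have "cycle_edges vs \<in> cycles E" unfolding cycles_def using vs by blast
  ultimately show "\<exists>!C. C \<in> cycles E" by blast
qed

lemma unicyclic_uni: "unicyclic n E \<longleftrightarrow> uni {1..n} E"
proof
  assume u: "unicyclic n E"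
  then have sg: "sg {1..n} E" and cn: "conn {1..n} E" and ex: "\<exists>!C. C \<in> cycles E"
    unfolding unicyclic_def by (auto simp: simple_sg connected_conn)
  then obtain vs where vs: "is_cycle E vs" unfolding cycles_def by blast
  have "{vs!0, vs!1} \<in> E" using cycle_has_edge[OF vs] cycle_sub[OF vs] by blast
  then have "vs!0 \<in> {1..n}" using sg_adj[OF sg] by blast
  then have ne: "{1..n} \<noteq> {}" by blast
  show "uni {1..n} E" unfolding uni_def using char[of "{1..n}" E] sg cn ex ne by simp
next
  assume u: "uni {1..n} E"
  then show "unicyclic n E" unfolding uni_def unicyclic_def using char[of "{1..n}" E]
    by (simp add: simple_sg connected_conn)
qed



definition sw_ok :: "nat set \<Rightarrow> nat \<times> nat \<times> nat \<times> nat \<Rightarrow> graph \<Rightarrow> bool" where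
  "sw_ok V A E \<longleftrightarrow> interchangeable E A \<and> uni V (two_switch A E)"

fun seqV :: "nat set \<Rightarrow> (nat \<times> nat \<times> nat \<times> nat) list \<Rightarrow> graph \<Rightarrow> bool" where
  "seqV V [] E = True"
| "seqV V (A # As) E = (sw_ok V A E \<and> seqV V As (two_switch A E))"

definition reach :: "nat set \<Rightarrow> graph \<Rightarrow> graph \<Rightarrow> bool" where
  "reach V G H \<longleftrightarrow> (\<exists>As. seqV V As G \<and> apply_switches As G = H)"

lemma reach_refl: "reach V G G"
  unfolding reach_def by (rule exI[of _ "[]"]) simp

lemma reach_step: "sw_ok V A G \<Longrightarrow> reach V (two_switch A G) H \<Longrightarrow> reach V G H"
  unfolding reach_def by (metis apply_switches.simps(2) seqV.simps(2))

lemma reach_trans: "reach V G H \<Longrightarrow> reach V H K \<Longrightarrow> reach V G K"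
proof -
  have "seqV V As G \<Longrightarrow> reach V (apply_switches As G) K \<Longrightarrow> reach V G K" for As
  proof (induction As arbitrary: G)
    case Nil then show ?case by simp
  next
    case (Cons A As)
    then have r: "reach V (two_switch A G) K" by simp
    have ok: "sw_ok V A G" using Cons.prems by simp
    show ?case by (rule reach_step[OF ok r])
  qed
  then show "reach V G H \<Longrightarrow> reach V H K \<Longrightarrow> reach V G K" unfolding reach_def by blast
qed

lemma seqV_nat: "seqV {1..n} As E = u_switch_seq n As E"
  by (induction As arbitrary: E) (auto simp: sw_ok_def u_switch_def unicyclic_uni)

lemma interch_unfold:
  "interchangeable E (a,b,c,d) \<longleftrightarrow> {a,b} \<in> E \<and> {c,d} \<in> E \<and> a \<noteq> c \<and> a \<noteq> d \<and> b \<noteq> c \<and> b \<noteq> d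
     \<and> {a,c} \<notin> E \<and> {b,d} \<notin> E"
  unfolding interchangeable_def adj_def by auto

lemma switch_eq:
  "interchangeable E (a,b,c,d) \<Longrightarrow> two_switch (a,b,c,d) E = (E - {{a,b},{c,d}}) \<union> {{a,c},{b,d}}"
  unfolding two_switch_def by simp

lemma degree_insert:
  assumes "finite E" "e \<notin> E"
  shows "degree (insert e E) u = degree E u + (if u \<in> e then 1 else 0)"
proof (cases "u \<in> e")
  case True
  then have "{x \<in> insert e E. u \<in> x} = insert e {x \<in> E. u \<in> x}" by auto
  then show ?thesis unfolding degree_def using assms True by simp
next
  case False
  then have "{x \<in> insert e E. u \<in> x} = {x \<in> E. u \<in> x}" by auto
  then show ?thesis unfolding degree_def using False by simp
qed

lemma switch_facts:
  assumes "sg V E" "finite E" "interchangeable E (a,b,c,d)"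
  defines "E0 \<equiv> E - {{a,b}} - {{c,d}}"
  shows "E = insert {a,b} (insert {c,d} E0)" "two_switch (a,b,c,d) E = insert {a,c} (insert {b,d} E0)"
    "{a,b} \<notin> insert {c,d} E0" "{c,d} \<notin> E0" "{a,c} \<notin> insert {b,d} E0" "{b,d} \<notin> E0"
    "a \<noteq> b" "c \<noteq> d" "a \<in> V" "b \<in> V" "c \<in> V" "d \<in> V" "finite E0"
    "a \<noteq> c" "a \<noteq> d" "b \<noteq> c" "b \<noteq> d" "{a,b} \<in> E" "{c,d} \<in> E" "{a,c} \<notin> E" "{b,d} \<notin> E"
proof -
  have i: "{a,b} \<in> E" "{c,d} \<in> E" "a \<noteq> c" "a \<noteq> d" "b \<noteq> c" "b \<noteq> d" "{a,c} \<notin> E" "{b,d} \<notin> E"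
    using assms(3) unfolding interch_unfold by auto
  have s1: "a \<noteq> b" "a \<in> V" "b \<in> V" using sg_adj[OF assms(1) i(1)] by auto
  have s2: "c \<noteq> d" "c \<in> V" "d \<in> V" using sg_adj[OF assms(1) i(2)] by auto
  show "E = insert {a,b} (insert {c,d} E0)" unfolding E0_def using i by auto
  show "two_switch (a,b,c,d) E = insert {a,c} (insert {b,d} E0)"
    unfolding switch_eq[OF assms(3)] E0_def using i by auto
  show "{a,b} \<notin> insert {c,d} E0" unfolding E0_def using i by (auto simp: doubleton_eq_iff)
  show "{c,d} \<notin> E0" unfolding E0_def by simp
  show "{a,c} \<notin> insert {b,d} E0" unfolding E0_def using i s1 by (auto simp: doubleton_eq_iff)
  show "{b,d} \<notin> E0" unfolding E0_def using i by auto
  show "finite E0" unfolding E0_def using assms(2) by simp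
  show "a \<noteq> b" "c \<noteq> d" "a \<in> V" "b \<in> V" "c \<in> V" "d \<in> V"
    "a \<noteq> c" "a \<noteq> d" "b \<noteq> c" "b \<noteq> d" "{a,b} \<in> E" "{c,d} \<in> E" "{a,c} \<notin> E" "{b,d} \<notin> E"
    using i s1 s2 by auto
qed

lemma switch_degree:
  assumes "sg V E" "finite E" "interchangeable E (a,b,c,d)"
  shows "degree (two_switch (a,b,c,d) E) u = degree E u"
proof -
  define E0 where "E0 = E - {{a,b}} - {{c,d}}"
  note f = switch_facts[OF assms, folded E0_def]
  have fin1: "finite (insert {c,d} E0)" "finite (insert {b,d} E0)" using f by simp_all
  have d1: "degree (insert {a,b} (insert {c,d} E0)) u = degree (insert {c,d} E0) u + (if u \<in> {a,b} then 1 else 0)"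
    by (rule degree_insert[OF fin1(1) f(3)])
  have d2: "degree (insert {c,d} E0) u = degree E0 u + (if u \<in> {c,d} then 1 else 0)"
    by (rule degree_insert[OF f(13) f(4)])
  have d3: "degree (insert {a,c} (insert {b,d} E0)) u = degree (insert {b,d} E0) u + (if u \<in> {a,c} then 1 else 0)"
    by (rule degree_insert[OF fin1(2) f(5)])
  have d4: "degree (insert {b,d} E0) u = degree E0 u + (if u \<in> {b,d} then 1 else 0)"
    by (rule degree_insert[OF f(13) f(6)])
  have "degree E u = degree E0 u + (if u \<in> {c,d} then 1 else 0) + (if u \<in> {a,b} then 1 else 0)"
    using d1 d2 f(1) by simp
  moreover have "degree (two_switch (a,b,c,d) E) u = degree E0 u + (if u \<in> {b,d} then 1 else 0) + (if u \<in> {a,c} then 1 else 0)"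
    using d3 d4 f(2) by simp
  ultimately show ?thesis using f by auto
qed

lemma switch_card:
  assumes "sg V E" "finite E" "interchangeable E (a,b,c,d)"
  shows "card (two_switch (a,b,c,d) E) = card E"
proof -
  define E0 where "E0 = E - {{a,b}} - {{c,d}}"
  note f = switch_facts[OF assms, folded E0_def]
  have "card E = card E0 + 2" by (subst f(1)) (use f in simp)
  moreover have "card (two_switch (a,b,c,d) E) = card E0 + 2" by (subst f(2)) (use f in simp)
  ultimately show ?thesis by simp
qed

lemma switch_sg:
  assumes "sg V E" "finite E" "interchangeable E (a,b,c,d)"
  shows "sg V (two_switch (a,b,c,d) E)"
proof -
  define E0 where "E0 = E - {{a,b}} - {{c,d}}"
  note f = switch_facts[OF assms, folded E0_def]
  have "sg V E0" by (rule sg_mono[OF assms(1)]) (auto simp: E0_def)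
  then show ?thesis unfolding f(2) sg_def using f by auto
qed

lemma switch_conn:
  assumes "sg V E" "conn V E" "finite E" "interchangeable E (a,b,c,d)"
    and cross: "\<exists>p\<in>{a,c}. \<exists>q\<in>{b,d}. (adj (E - {{a,b},{c,d}}))\<^sup>*\<^sup>* p q"
  shows "conn V (two_switch (a,b,c,d) E)"
proof -
  define F where "F = E - {{a,b},{c,d}}"
  define E' where "E' = two_switch (a,b,c,d) E"
  have E': "E' = F \<union> {{a,c},{b,d}}" unfolding E'_def F_def using switch_eq[OF assms(4)] by simp
  have FE': "F \<subseteq> E'" unfolding E' by auto
  have four: "(adj F)\<^sup>*\<^sup>* u a \<or> (adj F)\<^sup>*\<^sup>* u b \<or> (adj F)\<^sup>*\<^sup>* u c \<or> (adj F)\<^sup>*\<^sup>* u d"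
    if "(adj E)\<^sup>*\<^sup>* u t" "t \<in> {a,b,c,d}" for u t
    using that
  proof (induction rule: converse_rtranclp_induct)
    case base then show ?case by auto
  next
    case (step u u1)
    show ?case
    proof (cases "{u,u1} \<in> F")
      case True
      then have "adj F u u1" by (simp add: adj_def)
      then show ?thesis using step(3)[OF step(4)] by (meson converse_rtranclp_into_rtranclp)
    next
      case False
      then have "{u,u1} = {a,b} \<or> {u,u1} = {c,d}" using step(1) unfolding F_def adj_def by auto
      then have "u \<in> {a,b,c,d}" by (auto simp: doubleton_eq_iff)
      then show ?thesis by auto
    qed
  qed
  have ac: "(adj E')\<^sup>*\<^sup>* a c" "(adj E')\<^sup>*\<^sup>* c a" "(adj E')\<^sup>*\<^sup>* b d" "(adj E')\<^sup>*\<^sup>* d b"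
    unfolding E' by (auto intro!: R_edge simp: insert_commute)
  obtain p q where pq: "p \<in> {a,c}" "q \<in> {b,d}" "(adj F)\<^sup>*\<^sup>* p q" using cross unfolding F_def by blast
  have "(adj E')\<^sup>*\<^sup>* p q" using R_mono[OF FE' pq(3)] .
  then have ab: "(adj E')\<^sup>*\<^sup>* a b"
    using pq(1,2) ac by (auto intro: rtranclp_trans)
  have toa: "(adj E')\<^sup>*\<^sup>* s a" if "s \<in> {a,b,c,d}" for s
    using that ab ac R_sym[OF ab] by (auto intro: rtranclp_trans)
  have all: "(adj E')\<^sup>*\<^sup>* u a" if "u \<in> V" for u
  proof -
    have "(adj E)\<^sup>*\<^sup>* u a" using assms(2) that sg_adj[OF assms(1)] switch_facts(9)[OF assms(1,3,4)]
      unfolding conn_def by blast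
    then have "(adj F)\<^sup>*\<^sup>* u a \<or> (adj F)\<^sup>*\<^sup>* u b \<or> (adj F)\<^sup>*\<^sup>* u c \<or> (adj F)\<^sup>*\<^sup>* u d"
      using four by blast
    then obtain s where "s \<in> {a,b,c,d}" "(adj F)\<^sup>*\<^sup>* u s" by blast
    then show ?thesis using R_mono[OF FE'] toa by (meson rtranclp_trans)
  qed
  show ?thesis unfolding conn_def E'_def[symmetric]
    using all R_sym by (meson rtranclp_trans)
qed

lemma switch_ok:
  assumes "uni V E" "interchangeable E (a,b,c,d)"
    and cross: "\<exists>p\<in>{a,c}. \<exists>q\<in>{b,d}. (adj (E - {{a,b},{c,d}}))\<^sup>*\<^sup>* p q"
  shows "sw_ok V (a,b,c,d) E"
proof -
  have u: "finite V" "V \<noteq> {}" "sg V E" "conn V E" "card E = card V" using assms(1) unfolding uni_def by auto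
  have fE: "finite E" using sg_finite u by blast
  show ?thesis unfolding sw_ok_def uni_def
    using assms(2) u switch_sg[OF u(3) fE assms(2)] switch_card[OF u(3) fE assms(2)]
      switch_conn[OF u(3,4) fE assms(2) cross] by simp
qed

lemma sw_ok_degree:
  assumes "uni V E" "sw_ok V A E"
  shows "degree (two_switch A E) u = degree E u"
proof -
  obtain a b c d where A: "A = (a,b,c,d)" by (cases A) auto
  have u: "sg V E" "finite E" using assms(1) sg_finite unfolding uni_def by auto
  show ?thesis using switch_degree[OF u] assms(2) A unfolding sw_ok_def by simp
qed

lemma switch_reverse:
  assumes "uni V E" "sw_ok V (a,b,c,d) E"
  shows "sw_ok V (a,c,b,d) (two_switch (a,b,c,d) E) \<and> two_switch (a,c,b,d) (two_switch (a,b,c,d) E) = E"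
proof -
  have u: "sg V E" "finite E" using assms(1) sg_finite unfolding uni_def by auto
  have i: "interchangeable E (a,b,c,d)" using assms(2) unfolding sw_ok_def by simp
  note f = switch_facts[OF u i]
  define E' where "E' = two_switch (a,b,c,d) E"
  have E': "E' = (E - {{a,b},{c,d}}) \<union> {{a,c},{b,d}}" unfolding E'_def using switch_eq[OF i] .
  have i2: "interchangeable E' (a,c,b,d)" unfolding interch_unfold E' using f
    by (auto simp: doubleton_eq_iff)
  have "two_switch (a,c,b,d) E' = (E' - {{a,c},{b,d}}) \<union> {{a,b},{c,d}}" using switch_eq[OF i2] .
  also have "\<dots> = E" unfolding E' using f by auto
  finally show ?thesis using i2 assms(1) unfolding sw_ok_def E'_def by simp
qed

lemma reach_sym:
  assumes "uni V G" "reach V G H"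
  shows "reach V H G"
proof -
  have "seqV V As G \<Longrightarrow> uni V G \<Longrightarrow> reach V (apply_switches As G) G" for As
  proof (induction As arbitrary: G)
    case Nil then show ?case by (simp add: reach_refl)
  next
    case (Cons A As)
    obtain a b c d where A: "A = (a,b,c,d)" by (cases A) auto
    have ok: "sw_ok V A G" and rest: "seqV V As (two_switch A G)" using Cons.prems by auto
    have u': "uni V (two_switch A G)" using ok unfolding sw_ok_def by simp
    have r1: "reach V (apply_switches As (two_switch A G)) (two_switch A G)" using Cons.IH[OF rest u'] .
    have rev: "sw_ok V (a,c,b,d) (two_switch A G) \<and> two_switch (a,c,b,d) (two_switch A G) = G"
      using switch_reverse[OF Cons.prems(2)] ok A by simp
    have "reach V (two_switch A G) G" using rev reach_step[of V "(a,c,b,d)" "two_switch A G" G] reach_refl by simp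
    then show ?case using r1 reach_trans by simp
  qed
  then show ?thesis using assms unfolding reach_def by blast
qed

lemma uni_add_leaf:
  assumes "uni W G" "v \<notin> W" "w \<in> W"
  shows "uni (insert v W) (insert {v,w} G)"
proof -
  have u: "finite W" "W \<noteq> {}" "sg W G" "conn W G" "card G = card W" using assms(1) unfolding uni_def by auto
  have fG: "finite G" using sg_finite u by blast
  have nin: "{v,w} \<notin> G" using sg_adj[OF u(3), of v w] assms(2) by auto
  have sg: "sg (insert v W) (insert {v,w} G)" unfolding sg_def
  proof
    fix e assume "e \<in> insert {v,w} G"
    then show "\<exists>a b. e = {a, b} \<and> a \<noteq> b \<and> a \<in> insert v W \<and> b \<in> insert v W"
    proof
      assume "e = {v,w}" then show ?thesis using assms(2,3) by blast
    next
      assume "e \<in> G"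
      obtain a b where "e = {a,b}" "a \<noteq> b" "a \<in> W" "b \<in> W" by (rule sg_edgeE[OF u(3) \<open>e \<in> G\<close>])
      then show ?thesis by blast
    qed
  qed
  have sub: "G \<subseteq> insert {v,w} G" by auto
  have vw: "(adj (insert {v,w} G))\<^sup>*\<^sup>* v w" by (rule R_edge) simp
  have toW: "(adj (insert {v,w} G))\<^sup>*\<^sup>* x w" if "x \<in> insert v W" for x
  proof (cases "x = v")
    case True then show ?thesis using vw by simp
  next
    case False
    then have "x \<in> W" using that by simp
    then have "(adj G)\<^sup>*\<^sup>* x w" using u(4) assms(3) unfolding conn_def by blast
    then show ?thesis using R_mono[OF sub] by blast
  qed
  have cn: "conn (insert v W) (insert {v,w} G)" unfolding conn_def
    using toW R_sym by (meson rtranclp_trans)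
  have "card (insert {v,w} G) = card (insert v W)" using u(1,5) fG nin assms(2) by simp
  then show ?thesis unfolding uni_def using sg cn u(1) by simp
qed

lemma lift_step:
  assumes "uni W G0" "sw_ok W A G0" "v \<notin> W" "w \<in> W"
  shows "sw_ok (insert v W) A (insert {v,w} G0) \<and> two_switch A (insert {v,w} G0) = insert {v,w} (two_switch A G0)"
proof -
  obtain a b c d where A: "A = (a,b,c,d)" by (cases A) auto
  have u: "sg W G0" "finite G0" using assms(1) sg_finite unfolding uni_def by auto
  have i: "interchangeable G0 (a,b,c,d)" using assms(2) A unfolding sw_ok_def by simp
  note f = switch_facts[OF u i]
  have ne: "{x,y} \<noteq> {v,w}" if "x \<in> W" "y \<in> W" for x y using that assms(3) by (auto simp: doubleton_eq_iff)
  have i2: "interchangeable (insert {v,w} G0) (a,b,c,d)"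
    using i f ne unfolding interch_unfold by auto
  have n1: "{v,w} \<noteq> {a,b}" "{v,w} \<noteq> {c,d}" using ne[of a b] ne[of c d] f(9-12) by metis+
  have "insert {v,w} G0 - {{a,b},{c,d}} = insert {v,w} (G0 - {{a,b},{c,d}})" using n1 by blast
  also have "\<dots> \<union> {{a,c},{b,d}} = insert {v,w} ((G0 - {{a,b},{c,d}}) \<union> {{a,c},{b,d}})" by (simp add: insert_commute)
  finally have "(insert {v,w} G0 - {{a,b},{c,d}}) \<union> {{a,c},{b,d}} = insert {v,w} ((G0 - {{a,b},{c,d}}) \<union> {{a,c},{b,d}})" by simp
  then have "two_switch (a,b,c,d) (insert {v,w} G0) = insert {v,w} ((G0 - {{a,b},{c,d}}) \<union> {{a,c},{b,d}})"
    using switch_eq[OF i2] by simp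
  also have "\<dots> = insert {v,w} (two_switch (a,b,c,d) G0)" using switch_eq[OF i] by simp
  finally have eq: "two_switch (a,b,c,d) (insert {v,w} G0) = insert {v,w} (two_switch (a,b,c,d) G0)" .
  have "uni W (two_switch A G0)" using assms(2) unfolding sw_ok_def by simp
  then have "uni (insert v W) (insert {v,w} (two_switch A G0))" using uni_add_leaf assms(3,4) by blast
  then show ?thesis using eq i2 A unfolding sw_ok_def by simp
qed

lemma reach_lift:
  assumes "uni W G0" "reach W G0 H0" "v \<notin> W" "w \<in> W"
  shows "reach (insert v W) (insert {v,w} G0) (insert {v,w} H0)"
proof -
  have "seqV W As G0 \<Longrightarrow> uni W G0 \<Longrightarrow> reach (insert v W) (insert {v,w} G0) (insert {v,w} (apply_switches As G0))" for As
  proof (induction As arbitrary: G0)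
    case Nil then show ?case by (simp add: reach_refl)
  next
    case (Cons A As)
    have ok: "sw_ok W A G0" and rest: "seqV W As (two_switch A G0)" using Cons.prems by auto
    have u': "uni W (two_switch A G0)" using ok unfolding sw_ok_def by simp
    note l = lift_step[OF Cons.prems(2) ok assms(3,4)]
    have "reach (insert v W) (insert {v,w} (two_switch A G0)) (insert {v,w} (apply_switches As (two_switch A G0)))"
      using Cons.IH[OF rest u'] .
    then show ?case using l reach_step by fastforce
  qed
  then show ?thesis using assms(1,2) unfolding reach_def by blast
qed

lemma uni_leaf_remove:
  assumes "uni V E" "v \<in> V" "nbrs E v = {x}"
  shows "uni (V - {v}) (E - {{v,x}}) \<and> E = insert {v,x} (E - {{v,x}}) \<and> x \<in> V - {v}"
proof -
  have u: "finite V" "V \<noteq> {}" "sg V E" "conn V E" "card E = card V" using assms(1) unfolding uni_def by auto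
  have xE: "{v,x} \<in> E" using assms(3) nbrs_iff by (metis singletonI)
  have xV: "x \<in> V" "x \<noteq> v" using sg_adj[OF u(3) xE] by auto
  have r: "sg (V - {v}) (E - {{v,x}}) \<and> conn (V - {v}) (E - {{v,x}})"
    using leaf_remove[OF u(3,4) assms(2,3)] .
  have "card (E - {{v,x}}) = card (V - {v})" using u(5) xE assms(2) by (simp add: card_Diff_singleton)
  then have "uni (V - {v}) (E - {{v,x}})" unfolding uni_def using r u(1) xV by auto
  then show ?thesis using xE xV by auto
qed



lemma uni_unique_cycle:
  assumes "uni V G" "is_cycle G vs1" "is_cycle G vs2"
  shows "cycle_edges vs1 = cycle_edges vs2"
proof -
  have u: "finite V" "V \<noteq> {}" "sg V G" "conn V G" "card G = card V" using assms(1) unfolding uni_def by auto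
  then have "\<exists>!C. C \<in> cycles G" using char[OF u(1-4)] by simp
  then show ?thesis using assms(2,3) unfolding cycles_def by blast
qed

lemma ce_image: "cycle_edges vs = (\<lambda>i. {vs!i, vs!((i+1) mod length vs)}) ` {..<length vs}"
  unfolding cycle_edges_def by auto

lemma cycle_edges3: "cycle_edges [a,b,c] = {{a,b},{b,c},{c,a}}"
proof -
  have "{..<length [a,b,c]} = {0,1,2}" by auto
  then show ?thesis unfolding ce_image by simp
qed

lemma cycle_edges4: "cycle_edges [a,b,c,d] = {{a,b},{b,c},{c,d},{d,a}}"
proof -
  have "{..<length [a,b,c,d]} = {0,1,2,3}" by auto
  then show ?thesis unfolding ce_image by simp
qed

lemma uni_nbrs_deg:
  assumes "uni V G"
  shows "degree G u = card (nbrs G u)" "finite (nbrs G u)" "nbrs G u \<subseteq> V" "sg V G" "finite G"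
proof -
  have u: "finite V" "sg V G" using assms unfolding uni_def by auto
  have fG: "finite G" using sg_finite u by blast
  show "degree G u = card (nbrs G u)" using degree_nbrs[OF u(2) fG] .
  show "finite (nbrs G u)" using finite_nbrs[OF u] .
  show "nbrs G u \<subseteq> V" using sg_nbrs_sub[OF u(2)] .
  show "sg V G" "finite G" using u fG by auto
qed

lemma nbrs_sym: "u \<in> nbrs G v \<longleftrightarrow> v \<in> nbrs G u"
  by (simp add: nbrs_iff insert_commute)

lemma nbrs_noloop: "sg V G \<Longrightarrow> u \<in> nbrs G v \<Longrightarrow> u \<noteq> v"
  using sg_adj by (metis nbrs_iff)

lemma two_elems:
  assumes "finite A" "card A \<ge> 2"
  obtains z1 z2 where "z1 \<in> A" "z2 \<in> A" "z1 \<noteq> z2"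
proof -
  have "A \<noteq> {}" using assms by auto
  then obtain z1 where z1: "z1 \<in> A" by blast
  have "card (A - {z1}) \<ge> 1" using assms z1 by (simp add: card_Diff_singleton)
  then have "A - {z1} \<noteq> {}" by (metis card.empty not_one_le_zero)
  then obtain z2 where "z2 \<in> A - {z1}" by blast
  then show ?thesis using that z1 by blast
qed

lemma choose_p1:
  assumes U: "uni V G" and vx: "nbrs G v = {x}" and vV: "v \<in> V" and wV: "w \<in> V"
    and wv: "w \<noteq> v" and wx: "w \<noteq> x"
  obtains p1 where "p1 \<in> nbrs G w"
    "\<And>z. z \<in> nbrs G w \<Longrightarrow> z \<noteq> p1 \<Longrightarrow> (adj (G - {{v,x},{w,z}}))\<^sup>*\<^sup>* w x"
    "x \<in> nbrs G w \<Longrightarrow> p1 = x"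
    "x \<notin> nbrs G w \<Longrightarrow> (\<exists>q\<in>nbrs G w. q \<in> nbrs G x) \<Longrightarrow> p1 \<in> nbrs G x"
proof -
  note n = uni_nbrs_deg[OF U]
  have cn: "conn V G" using U unfolding uni_def by simp
  have xE: "{v,x} \<in> G" using vx nbrs_iff by (metis singletonI)
  have xV: "x \<in> V" "x \<noteq> v" using sg_adj[OF n(4) xE] by auto
  have vnw: "v \<notin> nbrs G w"
  proof
    assume "v \<in> nbrs G w"
    then have "w \<in> nbrs G v" using nbrs_sym by blast
    then show False using vx wx by simp
  qed
  show ?thesis
  proof (cases "x \<in> nbrs G w")
    case True
    show ?thesis
    proof (rule that[of x])
      show "x \<in> nbrs G w" using True .
      fix z assume z: "z \<in> nbrs G w" "z \<noteq> x"
      have "{w,x} \<in> G" using True by (simp add: nbrs_iff)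
      moreover have "{w,x} \<noteq> {v,x}" "{w,x} \<noteq> {w,z}" using wv wx z(2) by (auto simp: doubleton_eq_iff)
      ultimately show "(adj (G - {{v,x},{w,z}}))\<^sup>*\<^sup>* w x" by (intro R_edge) simp
    qed (use True in auto)
  next
    case notx: False
    show ?thesis
    proof (cases "\<exists>q\<in>nbrs G w. q \<in> nbrs G x")
      case True
      then obtain q where q: "q \<in> nbrs G w" "q \<in> nbrs G x" by blast
      have qv: "q \<noteq> v" using q(1) vnw by blast
      have qw: "q \<noteq> w" using nbrs_noloop[OF n(4) q(1)] .
      show ?thesis
      proof (rule that[of q])
        show "q \<in> nbrs G w" using q(1) .
        fix z assume z: "z \<in> nbrs G w" "z \<noteq> q"
        have zw: "z \<noteq> w" using nbrs_noloop[OF n(4) z(1)] .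
        have e1: "{w,q} \<in> G - {{v,x},{w,z}}" using q(1) wv wx z(2) by (auto simp: nbrs_iff doubleton_eq_iff)
        have e2: "{q,x} \<in> G - {{v,x},{w,z}}" using q(2) qv xV(2) wx qw z(2)
          by (auto simp: nbrs_iff doubleton_eq_iff insert_commute)
        show "(adj (G - {{v,x},{w,z}}))\<^sup>*\<^sup>* w x"
          using R_edge[OF e1] R_edge[OF e2] by (rule rtranclp_trans)
      qed (use notx q in auto)
    next
      case nocommon: False
      have "(adj G)\<^sup>*\<^sup>* w x" using cn wV xV(1) unfolding conn_def by blast
      then obtain p where p: "is_walk G p" "distinct p" "hd p = w" "last p = x" using R_walk by blast
      have lp: "length p \<ge> 2"
      proof -
        have "p \<noteq> []" using p(1) walk_nth by blast
        then obtain u rest where pu: "p = u # rest" by (cases p) auto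
        have "rest \<noteq> []"
        proof
          assume "rest = []"
          then have "hd p = last p" using pu by simp
          then show False using p(3,4) wx by simp
        qed
        then show ?thesis using pu by (cases rest) auto
      qed
      have p0: "p ! 0 = w" using p(3) lp by (cases p) auto
      have pl: "p ! (length p - 1) = x"
      proof -
        have "p \<noteq> []" using lp by auto
        then show ?thesis using p(4) last_conv_nth by metis
      qed
      have p1n: "p ! 1 \<in> nbrs G w"
      proof -
        have "adj G (p!0) (p!Suc 0)" using p(1) lp unfolding walk_nth by simp
        then show ?thesis using p0 by (simp add: adj_def nbrs_iff)
      qed
      have vnp: "v \<notin> set p"
      proof
        assume "v \<in> set p"
        then obtain j where j: "j < length p" "p ! j = v" by (meson in_set_conv_nth)
        have "j \<noteq> 0"
        proof
          assume "j = 0" then show False using j(2) p0 wv by simp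
        qed
        moreover have "j \<noteq> length p - 1"
        proof
          assume "j = length p - 1" then show False using j(2) pl xV(2) by simp
        qed
        ultimately have "0 < j" "Suc j < length p" using j by auto
        then have "p!(j-1) \<in> nbrs G v \<and> p!Suc j \<in> nbrs G v \<and> p!(j-1) \<noteq> p!Suc j"
          using internal_two_nbrs[OF p(1,2)] j(2) by metis
        then show False using vx by auto
      qed
      show ?thesis
      proof (rule that[of "p ! 1"])
        show "p ! 1 \<in> nbrs G w" using p1n .
        fix z assume z: "z \<in> nbrs G w" "z \<noteq> p ! 1"
        have zw: "z \<noteq> w" using nbrs_noloop[OF n(4) z(1)] .
        have "(adj (G - {{v,x},{w,z}}))\<^sup>*\<^sup>* (hd p) (last p)"
        proof (rule walk_avoid_R[OF p(1)])
          fix i assume i: "Suc i < length p"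
          have e: "{p!i, p!Suc i} \<in> G" using p(1) i unfolding walk_nth adj_def by blast
          have n1: "{p!i, p!Suc i} \<noteq> {v,x}"
          proof
            assume "{p!i, p!Suc i} = {v,x}"
            then have "v \<in> {p!i, p!Suc i}" by blast
            then show False using vnp i by (metis Suc_lessD empty_iff insert_iff nth_mem)
          qed
          have n2: "{p!i, p!Suc i} \<noteq> {w,z}"
          proof
            assume a: "{p!i, p!Suc i} = {w,z}"
            have "p!Suc i \<noteq> w"
            proof
              assume "p!Suc i = w"
              then have "p!Suc i = p!0" using p0 by simp
              moreover have "(0::nat) < length p" using i by linarith
              ultimately have "Suc i = 0" using nth_eq_iff_index_eq[OF p(2) i] by blast
              then show False by simp
            qed
            then have "p!i = w" "p!Suc i = z" using a zw by (auto simp: doubleton_eq_iff)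
            then have "i = 0" using nth_eq_iff_index_eq[OF p(2)] i p0 by (metis Suc_lessD gr0I less_nat_zero_code)
            then show False using \<open>p!Suc i = z\<close> z(2) by simp
          qed
          show "{p!i, p!Suc i} \<in> G - {{v,x},{w,z}}" using e n1 n2 by simp
        qed
        then show "(adj (G - {{v,x},{w,z}}))\<^sup>*\<^sup>* w x" using p(3,4) by simp
      qed (use notx nocommon in auto)
    qed
  qed
qed

lemma relocate:
  assumes U: "uni V G" and vx: "nbrs G v = {x}" and vV: "v \<in> V" and wV: "w \<in> V"
    and wv: "w \<noteq> v" and wx: "w \<noteq> x"
    and deg: "degree G w \<ge> 3 \<or> (degree G w \<ge> 2 \<and> degree G x = 2)"
  shows "\<exists>z. sw_ok V (v,x,w,z) G \<and> {v,w} \<in> two_switch (v,x,w,z) G"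
proof -
  note n = uni_nbrs_deg[OF U]
  have xE: "{v,x} \<in> G" using vx nbrs_iff by (metis singletonI)
  have xV: "x \<in> V" "x \<noteq> v" using sg_adj[OF n(4) xE] by auto
  have vnw: "v \<notin> nbrs G w"
  proof
    assume "v \<in> nbrs G w"
    then have "w \<in> nbrs G v" using nbrs_sym by blast
    then show False using vx wx by simp
  qed
  obtain p1 where P1: "p1 \<in> nbrs G w"
    and P2: "\<And>z. z \<in> nbrs G w \<Longrightarrow> z \<noteq> p1 \<Longrightarrow> (adj (G - {{v,x},{w,z}}))\<^sup>*\<^sup>* w x"
    and P3: "x \<in> nbrs G w \<Longrightarrow> p1 = x"
    and P4: "x \<notin> nbrs G w \<Longrightarrow> (\<exists>q\<in>nbrs G w. q \<in> nbrs G x) \<Longrightarrow> p1 \<in> nbrs G x"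
    using choose_p1[OF assms(1-6)] by blast
  have cW: "card (nbrs G w - {p1}) = card (nbrs G w) - 1" using P1 n(2) by (simp add: card_Diff_singleton)
  obtain z where z: "z \<in> nbrs G w" "z \<noteq> p1" "z \<noteq> x" "x \<notin> nbrs G z"
  proof (cases "degree G w \<ge> 3")
    case True
    then have "card (nbrs G w - {p1}) \<ge> 2" using cW n(1) by simp
    then obtain z1 z2 where zz: "z1 \<in> nbrs G w - {p1}" "z2 \<in> nbrs G w - {p1}" "z1 \<noteq> z2"
      using two_elems n(2) by (metis finite_Diff)
    have z1w: "z1 \<noteq> w" "z2 \<noteq> w" using nbrs_noloop[OF n(4)] zz by auto
    show ?thesis
    proof (cases "(z1 \<noteq> x \<and> x \<notin> nbrs G z1) \<or> (z2 \<noteq> x \<and> x \<notin> nbrs G z2)")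
      case True
      then show ?thesis using that zz by auto
    next
      case False
      show ?thesis
      proof (cases "x \<in> nbrs G w")
        case xin: True
        then have p1x: "p1 = x" using P3 by simp
        then have zx: "z1 \<noteq> x" "z2 \<noteq> x" using zz by auto
        then have xz: "x \<in> nbrs G z1" "x \<in> nbrs G z2" using False by auto
        have cyc: "is_cycle G [w, zi, x]" if "zi \<in> nbrs G w" "x \<in> nbrs G zi" "zi \<noteq> x" "zi \<noteq> w" for zi
          unfolding is_cycle_def cycle_edges3 using that xin wx
          by (auto simp: nbrs_iff insert_commute)
        have "cycle_edges [w, z1, x] = cycle_edges [w, z2, x]"
          using uni_unique_cycle[OF U cyc cyc] zz zx xz z1w by auto
        moreover have "{w,z1} \<notin> cycle_edges [w, z2, x]" unfolding cycle_edges3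
          using zz(3) zx wx z1w by (auto simp: doubleton_eq_iff)
        moreover have "{w,z1} \<in> cycle_edges [w, z1, x]" unfolding cycle_edges3 by simp
        ultimately show ?thesis by simp
      next
        case xout: False
        then have zx: "z1 \<noteq> x" "z2 \<noteq> x" using zz by auto
        then have xz: "x \<in> nbrs G z1" "x \<in> nbrs G z2" using False by auto
        then have "p1 \<in> nbrs G x" using P4[OF xout] zz nbrs_sym by blast
        have p1w: "p1 \<noteq> w" using nbrs_noloop[OF n(4) P1] .
        have p1x: "p1 \<noteq> x" using P1 xout by blast
        have cyc: "is_cycle G [w, p1, x, zi]" if "zi \<in> nbrs G w" "x \<in> nbrs G zi" "zi \<noteq> x" "zi \<noteq> w" "zi \<noteq> p1" for zi
          unfolding is_cycle_def cycle_edges4 using that xout wx P1 \<open>p1 \<in> nbrs G x\<close> p1w p1x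
          by (auto simp: nbrs_iff insert_commute)
        have "cycle_edges [w, p1, x, z1] = cycle_edges [w, p1, x, z2]"
          using uni_unique_cycle[OF U cyc cyc] zz zx xz z1w by auto
        moreover have "{x,z1} \<notin> cycle_edges [w, p1, x, z2]" unfolding cycle_edges4
          using zz(3) zx wx z1w p1x p1w zz by (auto simp: doubleton_eq_iff)
        moreover have "{x,z1} \<in> cycle_edges [w, p1, x, z1]" unfolding cycle_edges4 by simp
        ultimately show ?thesis by simp
      qed
    qed
  next
    case False
    then have dw: "degree G w \<ge> 2" and dx: "degree G x = 2" using deg by auto
    then have "card (nbrs G w - {p1}) \<ge> 1" using cW n(1) by simp
    then have "nbrs G w - {p1} \<noteq> {}" by (metis card.empty not_one_le_zero)
    then obtain z where zz: "z \<in> nbrs G w" "z \<noteq> p1" by blast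
    have zv: "z \<noteq> v" using zz vnw by blast
    have zw: "z \<noteq> w" using nbrs_noloop[OF n(4) zz(1)] .
    have vinx: "v \<in> nbrs G x" using vx nbrs_sym by blast
    have "card (nbrs G x) = 2" using dx n(1) by simp
    then have "card (nbrs G x - {v}) = 1" using vinx n(2) by (simp add: card_Diff_singleton)
    then obtain y where "nbrs G x - {v} = {y}" by (auto simp: card_1_singleton_iff)
    then have y: "nbrs G x = {v, y}" using vinx by blast
    show ?thesis
    proof (rule that[OF zz])
      show zx: "z \<noteq> x"
      proof
        assume "z = x"
        then have xin: "x \<in> nbrs G w" using zz by simp
        then show False using P3 zz \<open>z = x\<close> by simp
      qed
      show "x \<notin> nbrs G z"
      proof
        assume "x \<in> nbrs G z"
        then have "z \<in> nbrs G x" using nbrs_sym by blast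
        then have zy: "z = y" using y zv by auto
        show False
        proof (cases "x \<in> nbrs G w")
          case True
          then have "w \<in> nbrs G x" using nbrs_sym by blast
          then have "w = y" using y wv by auto
          then show False using zy zw by simp
        next
          case False
          have "z \<in> nbrs G x" using zy y by simp
          then have "p1 \<in> nbrs G x" using P4[OF False] zz by blast
          moreover have "p1 \<noteq> v" using P1 vnw by blast
          ultimately have "p1 = y" using y by auto
          then show False using zy zz(2) by simp
        qed
      qed
    qed
  qed
  have zV: "z \<noteq> v" using z(1) vnw by blast
  have i: "interchangeable G (v,x,w,z)" unfolding interch_unfold
    using xE z wv wx zV vnw by (auto simp: nbrs_iff insert_commute)
  have cross: "\<exists>p\<in>{v,w}. \<exists>q\<in>{x,z}. (adj (G - {{v,x},{w,z}}))\<^sup>*\<^sup>* p q"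
    using P2[OF z(1,2)] by blast
  have ok: "sw_ok V (v,x,w,z) G" using switch_ok[OF U i cross] .
  have "{v,w} \<in> two_switch (v,x,w,z) G" using switch_eq[OF i] by simp
  then show ?thesis using ok by blast
qed



lemma cross_edge:
  assumes "(adj E)\<^sup>*\<^sup>* r u" "r \<in> S" "u \<notin> S"
  shows "\<exists>b y. b \<in> S \<and> y \<notin> S \<and> {b,y} \<in> E"
  using assms(1,3)
proof (induction rule: rtranclp_induct)
  case base then show ?case using assms(2) by simp
next
  case (step z w)
  show ?case
  proof (cases "z \<in> S")
    case True then show ?thesis using step by (auto simp: adj_def)
  next
    case False then show ?thesis using step by blast
  qed
qed

lemma R_in_V:
  assumes "sg V E" "r \<in> V" "(adj E)\<^sup>*\<^sup>* r t"
  shows "t \<in> V"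
  using assms(3)
proof (induction rule: rtranclp_induct)
  case base then show ?case using assms(2) .
next
  case (step z w) then show ?case using sg_adj[OF assms(1), of z w] by (simp add: adj_def)
qed

lemma no_bridge:
  assumes "finite V" "sg V G" "\<forall>u\<in>V. degree G u = 2" "{b,b'} \<in> G"
  shows "(adj (G - {{b,b'}}))\<^sup>*\<^sup>* b b'"
proof (rule ccontr)
  assume nr: "\<not> (adj (G - {{b,b'}}))\<^sup>*\<^sup>* b b'"
  define G' where "G' = G - {{b,b'}}"
  define B where "B = {u \<in> V. (adj G')\<^sup>*\<^sup>* b u}"
  have bb: "b \<noteq> b'" "b \<in> V" "b' \<in> V" using sg_adj[OF assms(2,4)] by auto
  have fB: "finite B" unfolding B_def using assms(1) by simp
  have fG: "finite G" using sg_finite assms by blast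
  have bB: "b \<in> B" unfolding B_def using bb by simp
  have b'B: "b' \<notin> B" unfolding B_def using nr G'_def by simp
  have BV: "B \<subseteq> V" unfolding B_def by auto
  have "(\<Sum>u\<in>B. degree G u) = (\<Sum>u\<in>B. 2)" using assms(3) BV by (intro sum.cong) auto
  then have s1: "(\<Sum>u\<in>B. degree G u) = 2 * card B" by simp
  have s2: "(\<Sum>u\<in>B. degree G u) = (\<Sum>e\<in>G. card (e \<inter> B))"
    unfolding degree_def using double_count[OF fB fG] .
  have s3: "(\<Sum>e\<in>G. card (e \<inter> B)) = card ({b,b'} \<inter> B) + (\<Sum>e\<in>G - {{b,b'}}. card (e \<inter> B))"
    using sum.remove[OF fG assms(4)] .
  have c1: "card ({b,b'} \<inter> B) = 1"
  proof -
    have "{b,b'} \<inter> B = {b}" using bB b'B by auto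
    then show ?thesis by simp
  qed
  have ev: "even (card (e \<inter> B))" if e: "e \<in> G - {{b,b'}}" for e
  proof -
    have eG: "e \<in> G" using e by simp
    obtain p q where pq: "e = {p,q}" "p \<noteq> q" "p \<in> V" "q \<in> V" by (rule sg_edgeE[OF assms(2) eG])
    have eG': "{p,q} \<in> G'" using e pq G'_def by simp
    have pq1: "p \<in> B \<longleftrightarrow> q \<in> B"
    proof
      assume "p \<in> B"
      then have r: "(adj G')\<^sup>*\<^sup>* b p" unfolding B_def by simp
      have a: "adj G' p q" using eG' by (simp add: adj_def)
      have "(adj G')\<^sup>*\<^sup>* b q" using r a by (rule rtranclp.rtrancl_into_rtrancl)
      then show "q \<in> B" unfolding B_def using pq(4) by simp
    next
      assume "q \<in> B"
      then have r: "(adj G')\<^sup>*\<^sup>* b q" unfolding B_def by simp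
      have a: "adj G' q p" using eG' by (simp add: adj_def insert_commute)
      have "(adj G')\<^sup>*\<^sup>* b p" using r a by (rule rtranclp.rtrancl_into_rtrancl)
      then show "p \<in> B" unfolding B_def using pq(3) by simp
    qed
    show ?thesis
    proof (cases "p \<in> B")
      case True
      then have "e \<inter> B = {p,q}" using pq pq1 by auto
      then show ?thesis using pq(2) by simp
    next
      case False
      then have "e \<inter> B = {}" using pq pq1 by auto
      then show ?thesis by simp
    qed
  qed
  have "even (\<Sum>e\<in>G - {{b,b'}}. card (e \<inter> B))" using ev by (intro dvd_sum) auto
  then have "odd (\<Sum>e\<in>G. card (e \<inter> B))" using s3 c1 by simp
  then show False using s1 s2 by simp
qed

lemma spanning_common:
  assumes UG: "uni V G" and UH: "uni V H" and d: "\<forall>u\<in>V. degree G u = degree H u" and c: "conn V (G \<inter> H)"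
  shows "G = H"
proof -
  have u: "finite V" "V \<noteq> {}" "sg V G" "card G = card V" "sg V H" "card H = card V"
    using UG UH unfolding uni_def by auto
  have fG: "finite G" and fH: "finite H" using sg_finite u by blast+
  have sK: "sg V (G \<inter> H)" using sg_mono[OF u(3)] by blast
  have "card V \<le> card (G \<inter> H) + 1" using conn_card[OF u(1,2) sK c] .
  moreover have "card (G \<inter> H) \<le> card G" using fG by (simp add: card_mono)
  ultimately have cases: "card (G \<inter> H) = card V \<or> card (G \<inter> H) + 1 = card V" using u(4) by linarith
  show ?thesis
  proof (cases "card (G \<inter> H) = card V")
    case True
    have "G \<inter> H = G" using card_subset_eq[OF fG, of "G \<inter> H"] True u(4) by auto
    moreover have "G \<inter> H = H" using card_subset_eq[OF fH, of "G \<inter> H"] True u(6) by auto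
    ultimately show ?thesis by simp
  next
    case False
    then have cK: "card (G \<inter> H) + 1 = card V" using cases by simp
    have "card (G - G \<inter> H) = 1" using card_Diff_subset[of "G \<inter> H" G] fG cK u(4) by (simp add: finite_subset)
    then obtain e where e: "G - G \<inter> H = {e}" by (auto simp: card_1_singleton_iff)
    have "card (H - G \<inter> H) = 1" using card_Diff_subset[of "G \<inter> H" H] fH cK u(6) by (simp add: finite_subset)
    then obtain f where f: "H - G \<inter> H = {f}" by (auto simp: card_1_singleton_iff)
    have Gi: "G = insert e (G \<inter> H)" "e \<notin> G \<inter> H" using e by auto
    have Hi: "H = insert f (G \<inter> H)" "f \<notin> G \<inter> H" using f by auto
    have fK: "finite (G \<inter> H)" using fG by simp
    have "u \<in> e \<longleftrightarrow> u \<in> f" if uV: "u \<in> V" for u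
    proof -
      have "degree G u = degree (G \<inter> H) u + (if u \<in> e then 1 else 0)"
        using degree_insert[OF fK Gi(2)] Gi(1) by metis
      moreover have "degree H u = degree (G \<inter> H) u + (if u \<in> f then 1 else 0)"
        using degree_insert[OF fK Hi(2)] Hi(1) by metis
      ultimately show ?thesis using d uV by (auto split: if_splits)
    qed
    moreover have "e \<subseteq> V" using u(3) e sg_Pow by blast
    moreover have "f \<subseteq> V" using u(5) f sg_Pow by blast
    ultimately have "e = f" by blast
    then show ?thesis using Gi Hi by simp
  qed
qed

lemma R_avoid_edge:
  assumes "(adj E)\<^sup>*\<^sup>* r u" "\<And>t. (adj E)\<^sup>*\<^sup>* r t \<Longrightarrow> t \<noteq> y"
  shows "(adj (E - {{y,y'}}))\<^sup>*\<^sup>* r u"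
  using assms(1)
proof (induction rule: rtranclp_induct)
  case base then show ?case by simp
next
  case (step z w)
  have "z \<noteq> y" using assms(2) step(1) by blast
  moreover have "w \<noteq> y"
  proof -
    have "(adj E)\<^sup>*\<^sup>* r w" using step(1,2) by (rule rtranclp.rtrancl_into_rtrancl)
    then show ?thesis using assms(2) by blast
  qed
  ultimately have "{z,w} \<noteq> {y,y'}" by (auto simp: doubleton_eq_iff)
  then have "adj (E - {{y,y'}}) z w" using step(2) by (simp add: adj_def)
  then show ?case using step(3) by (meson rtranclp.rtrancl_into_rtrancl)
qed

lemma nbrs_remove: "nbrs (G - {{b,c}}) c = nbrs G c - {b}"
  unfolding nbrs_def by (auto simp: doubleton_eq_iff)



lemma tr_step:
  assumes UG: "uni V G" and UH: "uni V H" and dG: "\<forall>u\<in>V. degree G u = 2" and dH: "\<forall>u\<in>V. degree H u = 2"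
    and ne: "G \<noteq> H" and rV: "r \<in> V"
  shows "\<exists>A. sw_ok V A G \<and>
    (card V + 1) * card (G \<inter> H) + card {u \<in> V. (adj (G \<inter> H))\<^sup>*\<^sup>* r u}
    < (card V + 1) * card (two_switch A G \<inter> H) + card {u \<in> V. (adj (two_switch A G \<inter> H))\<^sup>*\<^sup>* r u}"
proof -
  have u: "finite V" "V \<noteq> {}" "sg V G" "conn V G" "card G = card V" using UG unfolding uni_def by auto
  have uH: "sg V H" "conn V H" "card H = card V" using UH unfolding uni_def by auto
  have fG: "finite G" and fH: "finite H" using sg_finite u uH by blast+
  note nG = uni_nbrs_deg[OF UG] and nH = uni_nbrs_deg[OF UH]
  define K where "K = G \<inter> H"
  define S where "S = {u \<in> V. (adj K)\<^sup>*\<^sup>* r u}"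
  have SV: "S \<subseteq> V" unfolding S_def by auto
  have rS: "r \<in> S" unfolding S_def using rV by simp
  have sgK: "sg V K" unfolding K_def using sg_mono[OF u(3)] by blast
  have "S \<noteq> V"
  proof
    assume SV: "S = V"
    have "conn V K" unfolding conn_def
    proof (intro ballI)
      fix a c assume "a \<in> V" "c \<in> V"
      then have "(adj K)\<^sup>*\<^sup>* r a" "(adj K)\<^sup>*\<^sup>* r c" using SV unfolding S_def by auto
      then show "(adj K)\<^sup>*\<^sup>* a c" using R_sym by (meson rtranclp_trans)
    qed
    then have "G = H" using spanning_common[OF UG UH] dG dH unfolding K_def by simp
    then show False using ne by simp
  qed
  then obtain u0 where u0: "u0 \<in> V" "u0 \<notin> S" using SV by blast
  have "(adj H)\<^sup>*\<^sup>* r u0" using uH(2) rV u0(1) unfolding conn_def by blast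
  then obtain b y where by0: "b \<in> S" "y \<notin> S" "{b,y} \<in> H" using cross_edge rS u0(2) by blast
  have bV: "b \<in> V" using by0 SV by blast
  have yV: "y \<in> V" "b \<noteq> y" using sg_adj[OF uH(1) by0(3)] by auto
  have Rrb: "(adj K)\<^sup>*\<^sup>* r b" using by0(1) unfolding S_def by simp
  have byG: "{b,y} \<notin> G"
  proof
    assume "{b,y} \<in> G"
    then have "adj K b y" using by0(3) unfolding K_def adj_def by simp
    then have "(adj K)\<^sup>*\<^sup>* r y" using Rrb by (meson rtranclp.rtrancl_into_rtrancl)
    then show False using by0(2) yV unfolding S_def by simp
  qed
  obtain bp where bp: "bp \<in> nbrs G b" "bp \<notin> nbrs H b"
  proof -
    have "\<not> nbrs G b \<subseteq> nbrs H b"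
    proof
      assume sub: "nbrs G b \<subseteq> nbrs H b"
      have "y \<in> nbrs H b" "y \<notin> nbrs G b" using by0(3) byG by (auto simp: nbrs_iff)
      then have "nbrs G b \<subseteq> nbrs H b - {y}" using sub by blast
      then have "card (nbrs G b) \<le> card (nbrs H b - {y})" using nH(2) by (simp add: card_mono)
      moreover have "card (nbrs H b - {y}) = 1" using \<open>y \<in> nbrs H b\<close> nH(1,2) dH bV by (simp add: card_Diff_singleton)
      moreover have "card (nbrs G b) = 2" using nG(1) dG bV by simp
      ultimately show False by simp
    qed
    then show ?thesis using that by blast
  qed
  have bpE: "{b,bp} \<in> G" "{b,bp} \<notin> H" using bp by (auto simp: nbrs_iff)
  have bpy: "bp \<noteq> y" using bp byG by (auto simp: nbrs_iff)
  have bpb: "bp \<noteq> b" "bp \<in> V" using sg_adj[OF u(3) bpE(1)] by auto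
  define G' where "G' = G - {{b,bp}}"
  have nb: "(adj G')\<^sup>*\<^sup>* b bp" unfolding G'_def using no_bridge[OF u(1,3) dG bpE(1)] .
  have cG': "conn V G'" unfolding G'_def using conn_remove_edge[OF u(4)] nb G'_def by simp
  have "(adj G')\<^sup>*\<^sup>* b y" using cG' bV yV unfolding conn_def by blast
  then obtain q where q: "is_walk G' q" "distinct q" "hd q = b" "last q = y" using R_walk by blast
  define L where "L = length q"
  have qne: "q \<noteq> []" using q(1) walk_nth by blast
  have q0: "q ! 0 = b" using q(3) qne by (cases q) auto
  have qL: "q ! (L - 1) = y" using q(4) qne last_conv_nth L_def by metis
  have L2: "L \<ge> 2"
  proof (rule ccontr)
    assume "\<not> L \<ge> 2"
    moreover have "L \<noteq> 0" using qne L_def by simp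
    ultimately have "L - 1 = 0" by simp
    then show False using q0 qL yV(2) by simp
  qed
  have G'G: "G' \<subseteq> G" unfolding G'_def by auto
  have edge: "{q!i, q!Suc i} \<in> G'" if "Suc i < L" for i
    using q(1) that unfolding walk_nth adj_def L_def by blast
  have L3: "L \<ge> 3"
  proof (rule ccontr)
    assume "\<not> L \<ge> 3"
    then have "L = 2" using L2 by simp
    then have "{q!0, q!Suc 0} \<in> G'" using edge[of 0] by simp
    moreover have "q!Suc 0 = y" using qL \<open>L = 2\<close> by simp
    ultimately show False using byG G'G q0 by auto
  qed
  define y' where "y' = q ! (L - 2)"
  have yy': "{y', y} \<in> G'" using edge[of "L - 2"] L3 qL y'_def by (simp add: Suc_diff_Suc numeral_2_eq_2)
  have int: "q!(j-1) \<in> nbrs G' (q!j) \<and> q!Suc j \<in> nbrs G' (q!j) \<and> q!(j-1) \<noteq> q!Suc j" if "0 < j" "Suc j < L" for j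
    using internal_two_nbrs[OF q(1,2) that(1)] that(2) L_def by simp
  have bp1: "card (nbrs G' bp) = 1"
  proof -
    have "nbrs G' bp = nbrs G bp - {b}" unfolding G'_def using nbrs_remove by simp
    moreover have "b \<in> nbrs G bp" using bp(1) nbrs_sym by blast
    ultimately show ?thesis using nG(1,2) dG bpb by (simp add: card_Diff_singleton)
  qed
  have notint: "q ! j \<noteq> bp" if "0 < j" "Suc j < L" for j
  proof
    assume "q ! j = bp"
    then have "q!(j-1) \<in> nbrs G' bp" "q!Suc j \<in> nbrs G' bp" "q!(j-1) \<noteq> q!Suc j" using int[OF that] by auto
    then have "card {q!(j-1), q!Suc j} \<le> card (nbrs G' bp)"
      using finite_subset[OF _ nG(2)] nbrs_remove G'_def by (intro card_mono) auto
    then show False using bp1 \<open>q!(j-1) \<noteq> q!Suc j\<close> by simp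
  qed
  have y'bp: "y' \<noteq> bp" unfolding y'_def using notint[of "L - 2"] L3 by simp
  have y'b: "y' \<noteq> b"
  proof
    assume "y' = b"
    then have "q ! (L - 2) = q ! 0" using q0 y'_def by simp
    moreover have "L - 2 < length q" "0 < length q" using L3 L_def by auto
    ultimately have "L - 2 = 0" using nth_eq_iff_index_eq[OF q(2), of "L - 2" 0] by simp
    then show False using L3 by simp
  qed
  have y'y: "y' \<noteq> y" using sg_adj[OF u(3), of y' y] yy' G'G by auto
  have bpy': "{bp, y'} \<notin> G"
  proof
    assume a: "{bp, y'} \<in> G"
    define j where "j = L - 2"
    have j: "0 < j" "Suc j < L" "Suc j = L - 1" "j - 1 = L - 3" using L3 j_def by auto
    have i2: "q!(j-1) \<in> nbrs G y'" "y \<in> nbrs G y'" "q!(j-1) \<noteq> y"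
      using int[OF j(1,2)] G'G qL j(3) y'_def j_def by (auto simp: nbrs_iff)
    have "nbrs G y' = {q!(j-1), y}"
    proof -
      have sub: "{q!(j-1), y} \<subseteq> nbrs G y'" using i2 by auto
      have "card {q!(j-1), y} = 2" using i2(3) by simp
      moreover have "card (nbrs G y') = 2" using nG(1) dG y'_def sg_adj[OF u(3), of y' y] yy' G'G by auto
      ultimately show ?thesis using card_subset_eq[OF nG(2) sub] by simp
    qed
    moreover have "bp \<in> nbrs G y'" using a by (simp add: nbrs_iff insert_commute)
    ultimately have "bp = q!(j-1)" using bpy by auto
    show False
    proof (cases "j - 1 = 0")
      case True
      then show False using \<open>bp = q!(j-1)\<close> q0 bpb by simp
    next
      case False
      then have "0 < j - 1" "Suc (j - 1) < L" using j by auto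
      then show False using notint \<open>bp = q!(j-1)\<close> by metis
    qed
  qed
  define G'' where "G'' = G - {{b,bp},{y,y'}}"
  have path: "(adj G'')\<^sup>*\<^sup>* b y'"
  proof -
    define q' where "q' = take (L - 1) q"
    have lq': "length q' = L - 1" unfolding q'_def L_def by simp
    have wq': "is_walk G q'"
    proof -
      have "q' \<noteq> []" using lq' L3 by auto
      moreover have "\<forall>i. Suc i < length q' \<longrightarrow> adj G (q'!i) (q'!Suc i)"
        using edge G'G lq' unfolding q'_def by (auto simp: adj_def)
      ultimately show ?thesis unfolding walk_nth by simp
    qed
    have "(adj G'')\<^sup>*\<^sup>* (hd q') (last q')"
    proof (rule walk_avoid_R[OF wq'])
      fix i assume i: "Suc i < length q'"
      have qi: "q'!i = q!i" "q'!Suc i = q!Suc i" using i lq' unfolding q'_def by auto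
      have e: "{q!i, q!Suc i} \<in> G'" using edge i lq' by simp
      have ii: "i < L - 1" "Suc i < L - 1" "L - 1 < length q" using i lq' L_def L3 by auto
      have "q!i \<noteq> q!(L-1)" using nth_eq_iff_index_eq[OF q(2), of i "L-1"] ii by simp
      moreover have "q!Suc i \<noteq> q!(L-1)" using nth_eq_iff_index_eq[OF q(2), of "Suc i" "L-1"] ii by simp
      ultimately have "q!i \<noteq> y" "q!Suc i \<noteq> y" using qL by auto
      then have "{q!i, q!Suc i} \<noteq> {y,y'}" by (auto simp: doubleton_eq_iff)
      then show "{q'!i, q'!Suc i} \<in> G''" using e qi unfolding G''_def G'_def by auto
    qed
    moreover have "hd q' = b"
    proof -
      obtain x xs where qx: "q = x # xs" using qne by (cases q) auto
      have "L - 1 = Suc (L - 2)" using L3 by simp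
      then show ?thesis unfolding q'_def using qx q(3) by simp
    qed
    moreover have "last q' = y'"
    proof -
      have "q' \<noteq> []" using lq' L3 by auto
      then have "last q' = q' ! (L - 2)" using lq' last_conv_nth by (metis diff_diff_left one_add_one)
      then show ?thesis unfolding q'_def y'_def using L3 by simp
    qed
    ultimately show ?thesis by simp
  qed
  have i: "interchangeable G (b,bp,y,y')" unfolding interch_unfold
    using bpE(1) yy' G'G yV(2) y'b bpy y'bp byG bpy' by (auto simp: insert_commute)
  have cross: "\<exists>p\<in>{b,y}. \<exists>q\<in>{bp,y'}. (adj (G - {{b,bp},{y,y'}}))\<^sup>*\<^sup>* p q"
    using path G''_def by blast
  have ok: "sw_ok V (b,bp,y,y') G" using switch_ok[OF UG i cross] .
  define G2 where "G2 = two_switch (b,bp,y,y') G"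
  have G2: "G2 = (G - {{b,bp},{y,y'}}) \<union> {{b,y},{bp,y'}}" unfolding G2_def using switch_eq[OF i] .
  define K2 where "K2 = G2 \<inter> H"
  have sub1: "K - {{y,y'}} \<subseteq> K2" unfolding K_def K2_def G2 using bpE(2) by auto
  have byK2: "{b,y} \<in> K2" unfolding K2_def G2 using by0(3) by simp
  have byK: "{b,y} \<notin> K" unfolding K_def using byG by simp
  have fK2: "finite K2" unfolding K2_def using fH by simp
  have fK: "finite K" unfolding K_def using fH by simp
  have cS: "card S \<le> card V" using SV u(1) by (simp add: card_mono)
  define S2 where "S2 = {u \<in> V. (adj K2)\<^sup>*\<^sup>* r u}"
  have main: "(card V + 1) * card K + card S < (card V + 1) * card K2 + card S2"
  proof (cases "{y,y'} \<in> H")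
    case False
    then have "K - {{y,y'}} = K" unfolding K_def by auto
    then have "insert {b,y} K \<subseteq> K2" using sub1 byK2 by auto
    then have "card (insert {b,y} K) \<le> card K2" using fK2 by (simp add: card_mono)
    then have "card K + 1 \<le> card K2" using byK fK by simp
    then have m: "(card V + 1) * (card K + 1) \<le> (card V + 1) * card K2" by (rule mult_le_mono2)
    have "(card V + 1) * (card K + 1) = (card V + 1) * card K + card V + 1" by (simp add: algebra_simps)
    then show ?thesis using cS m by linarith
  next
    case True
    have yyK: "{y,y'} \<in> K" unfolding K_def using True yy' G'G by (auto simp: insert_commute)
    have "insert {b,y} (K - {{y,y'}}) \<subseteq> K2" using sub1 byK2 by auto
    then have "card (insert {b,y} (K - {{y,y'}})) \<le> card K2" using fK2 by (simp add: card_mono)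
    moreover have "card (insert {b,y} (K - {{y,y'}})) = card K" using byK fK yyK
      by (simp add: card_Diff_singleton) (metis card_Diff1_less card_gt_0_iff Suc_pred empty_iff)
    ultimately have c1: "card K \<le> card K2" by simp
    have "insert y S \<subseteq> S2"
    proof
      fix t assume t: "t \<in> insert y S"
      have KK2: "K - {{y,y'}} \<subseteq> K2" using sub1 .
      have noty: "\<And>t'. (adj K)\<^sup>*\<^sup>* r t' \<Longrightarrow> t' \<noteq> y"
      proof -
        fix t' assume "(adj K)\<^sup>*\<^sup>* r t'"
        then have "t' \<in> S" unfolding S_def using R_in_V[OF sgK rV] by simp
        then show "t' \<noteq> y" using by0(2) by blast
      qed
      have RS: "(adj K2)\<^sup>*\<^sup>* r s" if "s \<in> S" for s
      proof -
        have "(adj K)\<^sup>*\<^sup>* r s" using that unfolding S_def by simp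
        then have "(adj (K - {{y,y'}}))\<^sup>*\<^sup>* r s" using R_avoid_edge noty by blast
        then show ?thesis using R_mono[OF KK2] by blast
      qed
      show "t \<in> S2"
      proof (cases "t = y")
        case True
        have "(adj K2)\<^sup>*\<^sup>* r b" using RS by0(1) by blast
        moreover have "adj K2 b y" using byK2 by (simp add: adj_def)
        ultimately have "(adj K2)\<^sup>*\<^sup>* r y" by (rule rtranclp.rtrancl_into_rtrancl)
        then show ?thesis unfolding S2_def using True yV by simp
      next
        case False
        then have "t \<in> S" using t by simp
        then show ?thesis unfolding S2_def using RS SV by auto
      qed
    qed
    then have "card (insert y S) \<le> card S2" unfolding S2_def using u(1) by (simp add: card_mono)
    moreover have "card (insert y S) = card S + 1" using by0(2) finite_subset[OF SV u(1)] by simp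
    ultimately have "card S + 1 \<le> card S2" by simp
    moreover have "(card V + 1) * card K \<le> (card V + 1) * card K2" using c1 by (rule mult_le_mono2)
    ultimately show ?thesis by linarith
  qed
  show ?thesis using ok main unfolding K_def S_def K2_def S2_def G2_def by blast
qed



lemma two_regular:
  assumes UH: "uni V H" and dH: "\<forall>u\<in>V. degree H u = 2"
  shows "uni V G \<Longrightarrow> \<forall>u\<in>V. degree G u = 2 \<Longrightarrow> reach V G H"
proof -
  have uH: "finite V" "V \<noteq> {}" "sg V H" "card H = card V" using UH unfolding uni_def by auto
  obtain r where rV: "r \<in> V" using uH(2) by blast
  define N where "N = card V"
  define \<mu> where "\<mu> = (\<lambda>X. (N + 1) * card (X \<inter> H) + card {u \<in> V. (adj (X \<inter> H))\<^sup>*\<^sup>* r u})"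
  define B where "B = (N + 1) * N + N + 1"
  have bnd: "\<mu> X < B" for X
  proof -
    have fH: "finite H" using sg_finite uH by blast
    have "card (X \<inter> H) \<le> card H" using fH by (simp add: card_mono)
    then have "card (X \<inter> H) \<le> N" using uH(4) N_def by simp
    then have a: "(N + 1) * card (X \<inter> H) \<le> (N + 1) * N" by (rule mult_le_mono2)
    have "card {u \<in> V. (adj (X \<inter> H))\<^sup>*\<^sup>* r u} \<le> N" unfolding N_def using uH(1) by (simp add: card_mono)
    then show ?thesis unfolding \<mu>_def B_def using a by linarith
  qed
  show "uni V G \<Longrightarrow> \<forall>u\<in>V. degree G u = 2 \<Longrightarrow> reach V G H"
  proof (induction "B - \<mu> G" arbitrary: G rule: less_induct)
    case less
    show ?case
    proof (cases "G = H")
      case True then show ?thesis by (simp add: reach_refl)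
    next
      case False
      obtain A where A: "sw_ok V A G" "\<mu> G < \<mu> (two_switch A G)"
        using tr_step[OF less(2) UH less(3) dH False rV] unfolding \<mu>_def N_def by blast
      have u2: "uni V (two_switch A G)" using A(1) unfolding sw_ok_def by simp
      have d2: "\<forall>u\<in>V. degree (two_switch A G) u = 2" using sw_ok_degree[OF less(2) A(1)] less(3) by simp
      have "B - \<mu> (two_switch A G) < B - \<mu> G" using A(2) bnd[of "two_switch A G"] by simp
      then have "reach V (two_switch A G) H" using less(1) u2 d2 by blast
      then show ?thesis using reach_step A(1) by blast
    qed
  qed
qed

lemma deg_pos:
  assumes U: "uni V G" and vV: "v \<in> V"
  shows "degree G v \<ge> 1"
proof -
  have u: "finite V" "V \<noteq> {}" "sg V G" "conn V G" "card G = card V" using U unfolding uni_def by auto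
  note n = uni_nbrs_deg[OF U]
  have "\<exists>u\<in>V. u \<noteq> v"
  proof (rule ccontr)
    assume "\<not> (\<exists>u\<in>V. u \<noteq> v)"
    then have V1: "V = {v}" using vV by blast
    have "G = {}"
    proof (rule ccontr)
      assume "G \<noteq> {}"
      then obtain e where e: "e \<in> G" by blast
      obtain a b where "e = {a,b}" "a \<noteq> b" "a \<in> V" "b \<in> V" by (rule sg_edgeE[OF u(3) e])
      then show False using V1 by simp
    qed
    then show False using u(5) V1 by simp
  qed
  then obtain u where uu: "u \<in> V" "u \<noteq> v" by blast
  have "(adj G)\<^sup>*\<^sup>* v u" using u(4) vV uu(1) unfolding conn_def by blast
  then obtain w where "adj G v w" using R_first_step uu(2) by metis
  then have "w \<in> nbrs G v" by (simp add: adj_def nbrs_iff)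
  then have "card (nbrs G v) \<ge> 1" using n(2) by (metis One_nat_def Suc_leI card_gt_0_iff empty_iff)
  then show ?thesis using n(1) by simp
qed

lemma leaf_nbr_deg:
  assumes U: "uni V H" and vV: "v \<in> V" and vw: "nbrs H v = {w}"
  shows "degree H w \<ge> 2"
proof (rule ccontr)
  assume "\<not> degree H w \<ge> 2"
  have u: "finite V" "V \<noteq> {}" "sg V H" "conn V H" "card H = card V" using U unfolding uni_def by auto
  note n = uni_nbrs_deg[OF U]
  have wE: "{v,w} \<in> H" using vw nbrs_iff by (metis singletonI)
  have wV: "w \<in> V" "w \<noteq> v" using sg_adj[OF u(3) wE] by auto
  have "v \<in> nbrs H w" using wE by (simp add: nbrs_iff insert_commute)
  moreover have "card (nbrs H w) \<le> 1" using \<open>\<not> degree H w \<ge> 2\<close> n(1) by simp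
  moreover have "card (nbrs H w) \<noteq> 0" using \<open>v \<in> nbrs H w\<close> n(2) by auto
  ultimately have "card (nbrs H w) = 1" by linarith
  then obtain a where "nbrs H w = {a}" by (auto simp: card_1_singleton_iff)
  then have wv: "nbrs H w = {v}" using \<open>v \<in> nbrs H w\<close> by simp
  have clos: "t \<in> {v,w}" if "(adj H)\<^sup>*\<^sup>* v t" for t
    using that
  proof (induction rule: rtranclp_induct)
    case base then show ?case by simp
  next
    case (step z t)
    then have "t \<in> nbrs H z" by (simp add: adj_def nbrs_iff)
    then show ?case using step(3) vw wv by auto
  qed
  have "V \<subseteq> {v,w}" using clos u(4) vV unfolding conn_def by blast
  then have "V = {v,w}" using vV wV by blast
  then have cV: "card V = 2" using wV by simp
  have "H \<subseteq> {{v,w}}"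
  proof
    fix e assume e: "e \<in> H"
    obtain a b where "e = {a,b}" "a \<noteq> b" "a \<in> V" "b \<in> V" by (rule sg_edgeE[OF u(3) e])
    then show "e \<in> {{v,w}}" using \<open>V = {v,w}\<close> by (auto simp: insert_commute)
  qed
  then have "card H \<le> card {{v,w}}" using card_mono[of "{{v,w}}" H] by simp
  then have "card H \<le> 1" by simp
  then show False using u(5) cV by simp
qed

lemma leaf_nbrs:
  assumes U: "uni V G" and d: "degree G v = 1"
  shows "\<exists>x. nbrs G v = {x}"
  using degree_one[OF uni_nbrs_deg(4,5)[OF U] d] .

lemma leaf_nbrs_eq:
  assumes U: "uni V G" and d: "degree G v = 1" and w: "w \<in> nbrs G v"
  shows "nbrs G v = {w}"
  using leaf_nbrs[OF U d] w by auto

lemma main_reach: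
  assumes "finite V"
  shows "uni V G \<Longrightarrow> uni V H \<Longrightarrow> \<forall>u\<in>V. degree G u = degree H u \<Longrightarrow> reach V G H"
  using assms
proof (induction "card V" arbitrary: V G H rule: less_induct)
  case less
  have UG: "uni V G" and UH: "uni V H" and dd: "\<forall>u\<in>V. degree G u = degree H u" using less.prems by auto
  have u: "finite V" "V \<noteq> {}" "sg V G" "conn V G" "card G = card V" using UG unfolding uni_def by auto
  show ?case
  proof (cases "\<exists>v\<in>V. degree G v = 1")
    case True
    then obtain v where vV: "v \<in> V" and dv: "degree G v = 1" by blast
    have same: "reach V G' H'" if UG': "uni V G'" and UH': "uni V H'"
        and dd': "\<forall>u\<in>V. degree G' u = degree H' u" and gx: "nbrs G' v = {x}" and hx: "nbrs H' v = {x}" for G' H' x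
    proof -
      note lg = uni_leaf_remove[OF UG' vV gx]
      note lh = uni_leaf_remove[OF UH' vV hx]
      define W where "W = V - {v}"
      have lt: "card W < card V" unfolding W_def using u(1) vV by (rule card_Diff1_less)
      have fW: "finite W" unfolding W_def using u(1) by simp
      have fG0: "finite (G' - {{v,x}})" using uni_nbrs_deg(5)[OF UG'] by simp
      have fH0: "finite (H' - {{v,x}})" using uni_nbrs_deg(5)[OF UH'] by simp
      have dW: "\<forall>u\<in>W. degree (G' - {{v,x}}) u = degree (H' - {{v,x}}) u"
      proof
        fix t assume t: "t \<in> W"
        have "degree G' t = degree (G' - {{v,x}}) t + (if t \<in> {v,x} then 1 else 0)"
          using degree_insert[OF fG0, of "{v,x}" t] lg by simp
        moreover have "degree H' t = degree (H' - {{v,x}}) t + (if t \<in> {v,x} then 1 else 0)"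
          using degree_insert[OF fH0, of "{v,x}" t] lh by simp
        ultimately show "degree (G' - {{v,x}}) t = degree (H' - {{v,x}}) t"
          using dd' t W_def by simp
      qed
      have "reach W (G' - {{v,x}}) (H' - {{v,x}})"
        using less.hyps[OF lt _ _ dW fW] lg lh W_def by blast
      moreover have uG0: "uni W (G' - {{v,x}})" using lg W_def by simp
      moreover have xW: "x \<in> W" using lg W_def by simp
      moreover have vW: "v \<notin> W" unfolding W_def by simp
      ultimately have "reach (insert v W) (insert {v,x} (G' - {{v,x}})) (insert {v,x} (H' - {{v,x}}))"
        using reach_lift by blast
      moreover have "insert v W = V" unfolding W_def using vV by blast
      ultimately show ?thesis using lg lh by simp
    qed
    obtain x where gx: "nbrs G v = {x}" using leaf_nbrs[OF UG dv] by blast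
    have dvH: "degree H v = 1" using dd vV dv by simp
    obtain w where hw: "nbrs H v = {w}" using leaf_nbrs[OF UH dvH] by blast
    show ?thesis
    proof (cases "x = w")
      case True then show ?thesis using same[OF UG UH dd gx] hw by simp
    next
      case xw: False
      have xE: "{v,x} \<in> G" using gx nbrs_iff by (metis singletonI)
      have xV: "x \<in> V" "x \<noteq> v" using sg_adj[OF u(3) xE] by auto
      have wE: "{v,w} \<in> H" using hw nbrs_iff by (metis singletonI)
      have wV: "w \<in> V" "w \<noteq> v" using sg_adj[OF uni_nbrs_deg(4)[OF UH] wE] by auto
      have dw2: "degree H w \<ge> 2" using leaf_nbr_deg[OF UH vV hw] .
      have dx2: "degree G x \<ge> 2" using leaf_nbr_deg[OF UG vV gx] .
      show ?thesis
      proof (cases "degree G w \<ge> 3")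
        case True
        obtain z where z: "sw_ok V (v,x,w,z) G" "{v,w} \<in> two_switch (v,x,w,z) G"
          using relocate[OF UG gx vV wV(1) wV(2) xw[symmetric]] True by blast
        define G1 where "G1 = two_switch (v,x,w,z) G"
        have U1: "uni V G1" using z(1) unfolding sw_ok_def G1_def by simp
        have d1: "\<forall>u\<in>V. degree G1 u = degree H u" using sw_ok_degree[OF UG z(1)] dd unfolding G1_def by simp
        have "w \<in> nbrs G1 v" using z(2) unfolding G1_def by (simp add: nbrs_iff)
        moreover have "degree G1 v = 1" using d1 dvH vV by simp
        ultimately have g1w: "nbrs G1 v = {w}" using leaf_nbrs_eq[OF U1] by blast
        have "reach V G1 H" using same[OF U1 UH d1 g1w hw] .
        then show ?thesis using reach_step z(1) G1_def by blast
      next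
        case False
        then have "degree H w = 2" using dw2 dd wV(1) by simp
        moreover have "degree H x \<ge> 2" using dx2 dd xV(1) by simp
        ultimately obtain z where z: "sw_ok V (v,w,x,z) H" "{v,x} \<in> two_switch (v,w,x,z) H"
          using relocate[OF UH hw vV xV(1) xV(2) xw] by force
        define H1 where "H1 = two_switch (v,w,x,z) H"
        have U1: "uni V H1" using z(1) unfolding sw_ok_def H1_def by simp
        have d1: "\<forall>u\<in>V. degree G u = degree H1 u" using sw_ok_degree[OF UH z(1)] dd unfolding H1_def by simp
        have "x \<in> nbrs H1 v" using z(2) unfolding H1_def by (simp add: nbrs_iff)
        moreover have "degree H1 v = 1" using d1 dv vV by simp
        ultimately have h1x: "nbrs H1 v = {x}" using leaf_nbrs_eq[OF U1] by blast
        have r1: "reach V G H1" using same[OF UG U1 d1 gx h1x] .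
        have "reach V H H1" using reach_step[OF z(1)] reach_refl H1_def by blast
        then have "reach V H1 H" using reach_sym[OF UH] by blast
        then show ?thesis using r1 reach_trans by blast
      qed
    qed
  next
    case False
    show ?thesis
    proof (cases "G = H")
      case True then show ?thesis by (simp add: reach_refl)
    next
      case neq: False
      have ge2: "degree G v \<ge> 2" if "v \<in> V" for v
        using deg_pos[OF UG that] False that by fastforce
      have hs: "(\<Sum>v\<in>V. degree G v) = 2 * card V" using handshake[OF u(1,3)] u(5) by simp
      have eq2: "degree G v = 2" if vV: "v \<in> V" for v
      proof (rule ccontr)
        assume "degree G v \<noteq> 2"
        then have "2 < degree G v" using ge2[OF vV] by simp
        then have "(\<Sum>v\<in>V. 2) < (\<Sum>v\<in>V. degree G v)"
          using ge2 vV u(1) by (intro sum_strict_mono_ex1) auto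
        then show False using hs by simp
      qed
      have "\<forall>u\<in>V. degree H u = 2" using eq2 dd by simp
      moreover have "\<forall>u\<in>V. degree G u = 2" using eq2 by simp
      ultimately show ?thesis using two_regular[OF UH] UG by blast
    qed
  qed
qed

theorem theorem3p9:
  fixes s :: "nat list" and U U' :: graph
  assumes "U \<in> U_set s" and "U' \<in> U_set s"
  shows "\<exists>As. u_switch_seq (length s) As U \<and> apply_switches As U = U'"
proof -
  define n where "n = length s"
  have a: "unicyclic n U" "deg_seq n U = s" "unicyclic n U'" "deg_seq n U' = s"
    using assms unfolding U_set_def n_def by auto
  have UU: "uni {1..n} U" "uni {1..n} U'" using a unicyclic_uni by auto
  have "map (degree U) [1..<n+1] = map (degree U') [1..<n+1]" using a unfolding deg_seq_def by simp
  then have "\<forall>u\<in>set [1..<n+1]. degree U u = degree U' u" by (simp only: map_eq_conv)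
  moreover have "set [1..<n+1] = {1..n}" by auto
  ultimately have "\<forall>u\<in>{1..n}. degree U u = degree U' u" by (simp only:)
  then have "reach {1..n} U U'" using main_reach UU by blast
  then obtain As where "seqV {1..n} As U" "apply_switches As U = U'" unfolding reach_def by blast
  then show ?thesis unfolding n_def[symmetric] using seqV_nat by blast
qed


end
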